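(* The reduction systems $(\mathcal T,\to_{\lambda j/{\tt CS}})$ and $(\mathcal T,\to_{\lambda j/{\tt o}})$ are both confluent and enjoy PSN (every $\beta$-strongly normalizing $\lambda$-term is strongly normalizing for $\to_{\lambda j/{\tt CS}}$, resp. $\to_{\lambda j/{\tt o}}$).
   Context: $\mathcal T$ is the set of $\lambda j$-terms, generated by $t,u::= x\mid \lambda x.t\mid t\,u\mid t[x/u]$; $\lambda x.t$ and $t[x/u]$ bind $x$ in $t$ (not in $u$), and terms are considered modulo $\alpha$-conversion. $\lambda$-terms are those without jumps. $\mathrm{fv}(t)$ is the set of free variables, $t\{x/u\}$ is capture-avoiding meta-level substitution, and $|t|_x$ is the number of free occurrences of $x$ in $t$. If $|t|_x=n\ge2$, $t_{[y]_x}$ denotes any term obtained from $t$ by replacing $k$ of the free occurrences of $x$ by a fresh variable $y$, for some $1\le k\le n-1$. ${\tt L}$ denotes a (possibly empty) list of jumps $[x_1/u_1]\dots[x_k/u_k]$. The rewriting rules, closed under all contexts, are: $({\tt dB})$ $(\lambda x.t){\tt L}\,u\to t[x/u]{\tt L}$ where no $x_i$ of ${\tt L}$ is free in $u$; $({\tt w})$ $t[x/u]\to t$ if $|t|_x=0$; $({\tt d})$ $t[x/u]\to t\{x/u\}$ if $|t|_x=1$; $({\tt c})$ $t[x/u]\to t_{[y]_x}[x/u][y/u]$ if $|t|_x\ge2$, $y$ fresh. $\to_{\lambda j}$ is the union of all four. $\equiv_{\tt CS}$ is the smallest equivalence closed under contexts containing $t[x/s][y/v]\sim t[y/v][x/s]$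 whenever $x\notin\mathrm{fv}(v)$ and $y\notin\mathrm{fv}(s)$. $\equiv_{\tt o}$ is the smallest equivalence closed under contexts containing that equation together with $\lambda y.(t[x/s])\sim(\lambda y.t)[x/s]$ if $y\notin\mathrm{fv}(s)$, and $t[x/s]\,v\sim(t\,v)[x/s]$ if $x\notin\mathrm{fv}(v)$. For an equivalence ${\tt E}$, $t\to_{\lambda j/{\tt E}}u$ iff $t\equiv_{\tt E}t'\to_{\lambda j}u'\equiv_{\tt E}u$ for some $t',u'$. $\beta$-reduction is the contextual closure of $(\lambda x.t)u\to t\{x/u\}$. *)

theory Defs
  imports Main
begin

text \<open>lambda-j terms modulo alpha-conversion, represented with de Bruijn indices.
  Sub t u stands for t[x/u]: it binds index 0 in t (not in u).\<close>

datatype trm = Var nat | Lam trm | App trm trm | Sub trm trm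

fun lift :: "nat \<Rightarrow> trm \<Rightarrow> trm" where
  "lift k (Var i) = (if i < k then Var i else Var (Suc i))"
| "lift k (Lam t) = Lam (lift (Suc k) t)"
| "lift k (App t u) = App (lift k t) (lift k u)"
| "lift k (Sub t u) = Sub (lift (Suc k) t) (lift k u)"

fun subst :: "trm \<Rightarrow> nat \<Rightarrow> trm \<Rightarrow> trm" where
  "subst (Var i) k u = (if i < k then Var i else if i = k then u else Var (i - 1))"
| "subst (Lam t) k u = Lam (subst t (Suc k) (lift 0 u))"
| "subst (App t s) k u = App (subst t k u) (subst s k u)"
| "subst (Sub t s) k u = Sub (subst t (Suc k) (lift 0 u)) (subst s k u)"

fun occ :: "nat \<Rightarrow> trm \<Rightarrow> nat" where
  "occ k (Var i) = (if i = k then 1 else 0)"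
| "occ k (Lam t) = occ (Suc k) t"
| "occ k (App t u) = occ k t + occ k u"
| "occ k (Sub t u) = occ (Suc k) t + occ k u"

fun sw :: "nat \<Rightarrow> trm \<Rightarrow> trm" where
  "sw k (Var i) = (if i = k then Var (Suc k) else if i = Suc k then Var k else Var i)"
| "sw k (Lam t) = Lam (sw (Suc k) t)"
| "sw k (App t u) = App (sw k t) (sw k u)"
| "sw k (Sub t u) = Sub (sw (Suc k) t) (sw k u)"

inductive ren :: "nat \<Rightarrow> nat \<Rightarrow> trm \<Rightarrow> trm \<Rightarrow> bool" where
  ren_keep: "ren x y (Var i) (Var i)"
| ren_repl: "ren x y (Var x) (Var y)"
| ren_Lam: "ren (Suc x) (Suc y) t s \<Longrightarrow> ren x y (Lam t) (Lam s)"
| ren_App: "ren x y t s \<Longrightarrow> ren x y u v \<Longrightarrow> ren x y (App t u) (App s v)"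
| ren_Sub: "ren (Suc x) (Suc y) t s \<Longrightarrow> ren x y u v \<Longrightarrow> ren x y (Sub t u) (Sub s v)"

text \<open>t L for a list of jumps L = [x1/u1]...[xk/uk] (u1 is the innermost argument).\<close>
fun subs :: "trm \<Rightarrow> trm list \<Rightarrow> trm" where
  "subs t [] = t"
| "subs t (u # us) = subs (Sub t u) us"

inductive lj_root :: "trm \<Rightarrow> trm \<Rightarrow> bool" where
  dB: "lj_root (App (subs (Lam t) L) u) (subs (Sub t ((lift 0 ^^ length L) u)) L)"
| w: "occ 0 t = 0 \<Longrightarrow> lj_root (Sub t u) (subst t 0 u)"
| d: "occ 0 t = 1 \<Longrightarrow> lj_root (Sub t u) (subst t 0 u)"
| c: "occ 0 t \<ge> 2 \<Longrightarrow> ren 0 1 (lift 1 t) s \<Longrightarrow> occ 0 s \<ge> 1 \<Longrightarrow> occ 1 s \<ge> 1 \<Longrightarrow>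
      lj_root (Sub t u) (Sub (Sub s (lift 0 u)) u)"

inductive ctx :: "(trm \<Rightarrow> trm \<Rightarrow> bool) \<Rightarrow> trm \<Rightarrow> trm \<Rightarrow> bool" for r where
  ctx_root: "r t u \<Longrightarrow> ctx r t u"
| ctx_Lam: "ctx r t u \<Longrightarrow> ctx r (Lam t) (Lam u)"
| ctx_AppL: "ctx r t u \<Longrightarrow> ctx r (App t s) (App u s)"
| ctx_AppR: "ctx r t u \<Longrightarrow> ctx r (App s t) (App s u)"
| ctx_SubL: "ctx r t u \<Longrightarrow> ctx r (Sub t s) (Sub u s)"
| ctx_SubR: "ctx r t u \<Longrightarrow> ctx r (Sub s t) (Sub s u)"

definition lj :: "trm \<Rightarrow> trm \<Rightarrow> bool" where
  "lj = ctx lj_root"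

text \<open>The equations. CS: t[x/s][y/v] ~ t[y/v][x/s] (x not free in v, y not free in s).\<close>
inductive CS_ax :: "trm \<Rightarrow> trm \<Rightarrow> bool" where
  "CS_ax (Sub (Sub t (lift 0 s)) v) (Sub (Sub (sw 0 t) (lift 0 v)) s)"

text \<open>o: CS together with lambda y.(t[x/s]) ~ (lambda y.t)[x/s] (y not free in s)
  and t[x/s] v ~ (t v)[x/s] (x not free in v).\<close>
inductive o_ax :: "trm \<Rightarrow> trm \<Rightarrow> bool" where
  o_CS: "CS_ax t u \<Longrightarrow> o_ax t u"
| o_Lam: "o_ax (Lam (Sub t (lift 0 s))) (Sub (Lam (sw 0 t)) s)"
| o_App: "o_ax (App (Sub t s) v) (Sub (App t (lift 0 v)) s)"

definition eqCS :: "trm \<Rightarrow> trm \<Rightarrow> bool" where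
  "eqCS = equivclp (ctx CS_ax)"

definition eqo :: "trm \<Rightarrow> trm \<Rightarrow> bool" where
  "eqo = equivclp (ctx o_ax)"

definition lj_mod :: "(trm \<Rightarrow> trm \<Rightarrow> bool) \<Rightarrow> trm \<Rightarrow> trm \<Rightarrow> bool" where
  "lj_mod E t u \<longleftrightarrow> (\<exists>t' u'. E t t' \<and> lj t' u' \<and> E u' u)"

inductive beta :: "trm \<Rightarrow> trm \<Rightarrow> bool" where
  beta_root: "beta (App (Lam t) u) (subst t 0 u)"
| beta_Lam: "beta t u \<Longrightarrow> beta (Lam t) (Lam u)"
| beta_AppL: "beta t u \<Longrightarrow> beta (App t s) (App u s)"
| beta_AppR: "beta t u \<Longrightarrow> beta (App s t) (App s u)"

fun is_lambda :: "trm \<Rightarrow> bool" where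
  "is_lambda (Var i) = True"
| "is_lambda (Lam t) = is_lambda t"
| "is_lambda (App t u) = (is_lambda t \<and> is_lambda u)"
| "is_lambda (Sub t u) = False"

definition SN :: "('a \<Rightarrow> 'a \<Rightarrow> bool) \<Rightarrow> 'a \<Rightarrow> bool" where
  "SN r a \<longleftrightarrow> Wellfounded.accp (\<lambda>y x. r x y) a"

definition confluent_mod :: "('a \<Rightarrow> 'a \<Rightarrow> bool) \<Rightarrow> ('a \<Rightarrow> 'a \<Rightarrow> bool) \<Rightarrow> bool" where
  "confluent_mod E r \<longleftrightarrow> (\<forall>t u1 u2. r\<^sup>*\<^sup>* t u1 \<and> r\<^sup>*\<^sup>* t u2 \<longrightarrow>
      (\<exists>v1 v2. r\<^sup>*\<^sup>* u1 v1 \<and> r\<^sup>*\<^sup>* u2 v2 \<and> E v1 v2))"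

definition PSN :: "(trm \<Rightarrow> trm \<Rightarrow> bool) \<Rightarrow> bool" where
  "PSN r \<longleftrightarrow> (\<forall>t. is_lambda t \<longrightarrow> SN beta t \<longrightarrow> SN r t)"

end

theory Submission
  imports Defs "HOL-Library.Multiset"
begin


lemma lift_lift:
  "i \<le> k \<Longrightarrow> lift (Suc k) (lift i t) = lift i (lift k t)"
  by (induct t arbitrary: i k) auto

lemma lift_subst [simp]:
  "j \<le> i \<Longrightarrow> lift i (subst t j s) = subst (lift (Suc i) t) j (lift i s)"
  by (induct t arbitrary: i j s) (auto simp: lift_lift)

lemma lift_subst_lt:
  "i \<le> j \<Longrightarrow> lift i (subst t j s) = subst (lift i t) (Suc j) (lift i s)"
  by (induct t arbitrary: i j s) (auto simp: lift_lift)

lemma subst_lift [simp]: "subst (lift k t) k s = t"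
  by (induct t arbitrary: k s) auto

lemma subst_subst:
  "i \<le> j \<Longrightarrow> subst (subst t (Suc j) (lift i v)) i (subst u j v) = subst (subst t i u) j v"
  by (induct t arbitrary: i j u v)
     (auto simp: lift_lift [symmetric] lift_subst_lt)


inductive par :: "trm \<Rightarrow> trm \<Rightarrow> bool" where
  pVar [simp, intro!]: "par (Var n) (Var n)"
| pLam [simp, intro!]: "par s t \<Longrightarrow> par (Lam s) (Lam t)"
| pApp [simp, intro!]: "par s s' \<Longrightarrow> par t t' \<Longrightarrow> par (App s t) (App s' t')"
| pSub [simp, intro!]: "par s s' \<Longrightarrow> par t t' \<Longrightarrow> par (Sub s t) (Sub s' t')"
| pBeta [simp, intro!]: "par s s' \<Longrightarrow> par t t' \<Longrightarrow> par (App (Lam s) t) (subst s' 0 t')"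

inductive_cases par_cases [elim!]:
  "par (Var n) t"
  "par (Lam s) t"
  "par (App (Lam s) t) u"
  "par (App s t) u"
  "par (Sub s t) u"

lemma par_refl [simp]: "par t t"
  by (induct t) auto

lemma par_lift [simp]: "par t t' \<Longrightarrow> par (lift n t) (lift n t')"
  by (induct t arbitrary: t' n) fastforce+

lemma par_subst:
  "par s s' \<Longrightarrow> par t t' \<Longrightarrow> par (subst t n s) (subst t' n s')"
proof (induct t arbitrary: s s' t' n)
  case (Var x) then show ?case by auto
next
  case (Lam t)
  from Lam.prems(2) obtain t0 where "t' = Lam t0" "par t t0" by blast
  then show ?case using Lam by simp
next
  case (App t1 t2)
  have "(\<exists>a b. t' = App a b \<and> par t1 a \<and> par t2 b) \<or>
     (\<exists>a a' b'. t1 = Lam a \<and> par a a' \<and> par t2 b' \<and> t' = subst a' 0 b')"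
    using App.prems(2) by blast
  then show ?case
  proof
    assume "\<exists>a b. t' = App a b \<and> par t1 a \<and> par t2 b"
    then obtain a b where "t' = App a b" "par t1 a" "par t2 b" by blast
    then show ?thesis using App.hyps[OF App.prems(1)] by simp
  next
    assume "\<exists>a a' b'. t1 = Lam a \<and> par a a' \<and> par t2 b' \<and> t' = subst a' 0 b'"
    then obtain a a' b' where pBeta: "t1 = Lam a" "par a a'" "par t2 b'" "t' = subst a' 0 b'" by blast
    have "par (subst (Lam a) n s) (subst (Lam a') n s')"
      using App.hyps(1)[OF App.prems(1), of "Lam a'"] pBeta by simp
    then have h1: "par (subst a (Suc n) (lift 0 s)) (subst a' (Suc n) (lift 0 s'))" by auto
    have h2: "par (subst t2 n s) (subst b' n s')" using App.hyps(2)[OF App.prems(1)] pBeta by simp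
    have "par (subst (App (Lam a) t2) n s) (subst (subst a' (Suc n) (lift 0 s')) 0 (subst b' n s'))"
      using h1 h2 by simp
    then show ?thesis using pBeta by (simp add: subst_subst [of 0 n, simplified])
  qed
next
  case (Sub t1 t2) 
  from Sub.prems(2) obtain a b where "t' = Sub a b" "par t1 a" "par t2 b" by blast
  then show ?case using Sub by simp
qed

fun cd :: "trm \<Rightarrow> trm" where
  "cd (Var n) = Var n"
| "cd (App (Lam u) t) = subst (cd u) 0 (cd t)"
| "cd (App s t) = App (cd s) (cd t)"
| "cd (Lam s) = Lam (cd s)"
| "cd (Sub s t) = Sub (cd s) (cd t)"

lemma cd_App_nonlam: "\<forall>u. s \<noteq> Lam u \<Longrightarrow> cd (App s t) = App (cd s) (cd t)"
  by (cases s) auto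

lemma par_App_nonlam: "par (App s t) w \<Longrightarrow> \<forall>u. s \<noteq> Lam u \<Longrightarrow> \<exists>a b. w = App a b \<and> par s a \<and> par t b"
  by (erule par.cases) auto

lemma par_cd: "par s t \<Longrightarrow> par t (cd s)"
proof (induct s arbitrary: t)
  case (Var n) then show ?case by (erule_tac par.cases) auto
next
  case (Lam s) 
  from Lam.prems obtain a where "t = Lam a" "par s a" by (erule_tac par.cases) auto
  then show ?case using Lam.hyps by simp
next
  case (Sub s1 s2) 
  from Sub.prems obtain a b where "t = Sub a b" "par s1 a" "par s2 b" by (erule_tac par.cases) auto
  then show ?case using Sub.hyps by simp
next
  case (App s1 s2)
  show ?case
  proof (cases "\<exists>u. s1 = Lam u")
    case False
    then have nl: "\<forall>u. s1 \<noteq> Lam u" by blast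
    from par_App_nonlam[OF App.prems nl] obtain a b where "t = App a b" "par s1 a" "par s2 b" by blast
    then show ?thesis using App.hyps cd_App_nonlam[OF nl] by simp
  next
    case True
    then obtain u where u: "s1 = Lam u" by blast
    have "(\<exists>a b. t = App (Lam a) b \<and> par u a \<and> par s2 b) \<or> (\<exists>a b. t = subst a 0 b \<and> par u a \<and> par s2 b)"
      using App.prems u by (erule_tac par.cases) auto
    then show ?thesis
    proof
      assume "\<exists>a b. t = App (Lam a) b \<and> par u a \<and> par s2 b"
      then obtain a b where ab: "t = App (Lam a) b" "par u a" "par s2 b" by blast
      have "par (Lam a) (Lam (cd u))" using App.hyps(1)[of "Lam a"] u ab by simp
      then have "par a (cd u)" by (erule_tac par.cases) auto
      then show ?thesis using ab u App.hyps(2) by simp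
    next
      assume "\<exists>a b. t = subst a 0 b \<and> par u a \<and> par s2 b"
      then obtain a b where ab: "t = subst a 0 b" "par u a" "par s2 b" by blast
      have "par (Lam a) (Lam (cd u))" using App.hyps(1)[of "Lam a"] u ab by simp
      then have "par a (cd u)" by (erule_tac par.cases) auto
      then show ?thesis using ab u App.hyps(2) by (simp add: par_subst)
    qed
  qed
qed

lemma is_lambda_lift [simp]: "is_lambda (lift k t) = is_lambda t"
  by (induct t arbitrary: k) auto

lemma is_lambda_subst: "is_lambda t \<Longrightarrow> is_lambda u \<Longrightarrow> is_lambda (subst t k u)"
  by (induct t arbitrary: k u) auto

lemma rtr_Lam: "beta\<^sup>*\<^sup>* s s' \<Longrightarrow> beta\<^sup>*\<^sup>* (Lam s) (Lam s')"
  by (induct rule: rtranclp_induct) (auto intro: rtranclp.rtrancl_into_rtrancl beta.intros)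
lemma rtr_AppL: "beta\<^sup>*\<^sup>* s s' \<Longrightarrow> beta\<^sup>*\<^sup>* (App s t) (App s' t)"
  by (induct rule: rtranclp_induct) (auto intro: rtranclp.rtrancl_into_rtrancl beta.intros)
lemma rtr_AppR: "beta\<^sup>*\<^sup>* s s' \<Longrightarrow> beta\<^sup>*\<^sup>* (App t s) (App t s')"
  by (induct rule: rtranclp_induct) (auto intro: rtranclp.rtrancl_into_rtrancl beta.intros)
lemma rtr_App: "beta\<^sup>*\<^sup>* s s' \<Longrightarrow> beta\<^sup>*\<^sup>* t t' \<Longrightarrow> beta\<^sup>*\<^sup>* (App s t) (App s' t')"
  by (meson rtr_AppL rtr_AppR rtranclp_trans)

lemma par_lam: "par t u \<Longrightarrow> is_lambda t \<Longrightarrow> is_lambda u \<and> beta\<^sup>*\<^sup>* t u"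
proof (induct rule: par.induct)
  case (pBeta s s' t t')
  then have "beta\<^sup>*\<^sup>* (App (Lam s) t) (App (Lam s') t')" by (auto intro: rtr_App rtr_Lam)
  then show ?case using pBeta by (auto intro: rtranclp.rtrancl_into_rtrancl beta.intros is_lambda_subst)
qed (auto intro: rtr_App rtr_Lam)

lemma beta_lam: "beta t u \<Longrightarrow> is_lambda t \<Longrightarrow> is_lambda u"
  by (induct rule: beta.induct) (auto intro: is_lambda_subst)

lemma beta_par: "beta t u \<Longrightarrow> par t u"
  by (induct rule: beta.induct) auto

lemma par_strip: "par\<^sup>*\<^sup>* t u1 \<Longrightarrow> par t u2 \<Longrightarrow> \<exists>w. par u1 w \<and> par\<^sup>*\<^sup>* u2 w"
proof (induct arbitrary: u2 rule: rtranclp_induct)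
  case base then show ?case by (intro exI[of _ u2]) simp
next
  case (step y z)
  then obtain w where w: "par y w" "par\<^sup>*\<^sup>* u2 w" by metis
  have "par z (cd y)" by (rule par_cd[OF step(2)])
  moreover have "par w (cd y)" by (rule par_cd[OF w(1)])
  ultimately show ?case using w(2) by (meson rtranclp.rtrancl_into_rtrancl)
qed

lemma par_conf: "par\<^sup>*\<^sup>* t u2 \<Longrightarrow> par\<^sup>*\<^sup>* t u1 \<Longrightarrow> \<exists>w. par\<^sup>*\<^sup>* u1 w \<and> par\<^sup>*\<^sup>* u2 w"
proof (induct rule: rtranclp_induct)
  case base then show ?case by (intro exI[of _ u1]) simp
next
  case (step y z)
  then obtain w where "par\<^sup>*\<^sup>* u1 w" "par\<^sup>*\<^sup>* y w" by metis
  from par_strip[OF this(2) step(2)] obtain w' where "par w w'" "par\<^sup>*\<^sup>* z w'" by metis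
  then show ?case using \<open>par\<^sup>*\<^sup>* u1 w\<close> by (meson rtranclp.rtrancl_into_rtrancl)
qed

lemma beta_rtr_par: "beta\<^sup>*\<^sup>* t u \<Longrightarrow> par\<^sup>*\<^sup>* t u"
  by (induct rule: rtranclp_induct) (auto intro: rtranclp.rtrancl_into_rtrancl beta_par)

lemma par_rtr_beta: "par\<^sup>*\<^sup>* t u \<Longrightarrow> is_lambda t \<Longrightarrow> is_lambda u \<and> beta\<^sup>*\<^sup>* t u"
  by (induct rule: rtranclp_induct) (auto dest: par_lam intro: rtranclp_trans)

theorem beta_conf: "is_lambda t \<Longrightarrow> beta\<^sup>*\<^sup>* t u1 \<Longrightarrow> beta\<^sup>*\<^sup>* t u2 \<Longrightarrow>
   \<exists>w. beta\<^sup>*\<^sup>* u1 w \<and> beta\<^sup>*\<^sup>* u2 w"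
proof -
  assume a: "is_lambda t" "beta\<^sup>*\<^sup>* t u1" "beta\<^sup>*\<^sup>* t u2"
  then obtain w where w: "par\<^sup>*\<^sup>* u1 w" "par\<^sup>*\<^sup>* u2 w" using par_conf beta_rtr_par by blast
  have "is_lambda u1" "is_lambda u2" using a par_rtr_beta beta_rtr_par by blast+
  then show ?thesis using w par_rtr_beta by blast
qed


fun unf :: "trm \<Rightarrow> trm" where
  "unf (Var i) = Var i"
| "unf (Lam t) = Lam (unf t)"
| "unf (App t u) = App (unf t) (unf u)"
| "unf (Sub t u) = subst (unf t) 0 (unf u)"

lemma unf_lam [simp]: "is_lambda (unf t)"
  by (induct t) (auto intro: is_lambda_subst)

lemma unf_lift [simp]: "unf (lift k t) = lift k (unf t)"
  by (induct t arbitrary: k) auto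

lemma unf_subst [simp]: "unf (subst t k u) = subst (unf t) k (unf u)"
  by (induct t arbitrary: k u) (auto simp: subst_subst[of 0, simplified])

lemma sw_lift: "j \<le> k \<Longrightarrow> sw (Suc k) (lift j t) = lift j (sw k t)"
  by (induct t arbitrary: j k) auto

lemma sw_subst: "j \<le> k \<Longrightarrow> sw k (subst A j B) = subst (sw (Suc k) A) j (sw k B)"
  by (induct A arbitrary: j k B) (auto simp: sw_lift)

lemma unf_sw [simp]: "unf (sw k t) = sw k (unf t)"
  by (induct t arbitrary: k) (auto simp: sw_subst)

lemma CS_subst: "subst (subst T k (lift k S)) k V = subst (subst (sw k T) k (lift k V)) k S"
  by (induct T arbitrary: k S V) (auto simp: lift_lift[of 0, simplified, symmetric])

lemma oLam_subst: "subst T k (lift k S) = subst (sw k T) (Suc k) (lift k S)"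
  by (induct T arbitrary: k S) (auto simp: lift_lift[of 0, simplified, symmetric])

lemma unf_o: "o_ax t u \<Longrightarrow> unf t = unf u"
proof (induct rule: o_ax.induct)
  case (o_CS t u)
  then show ?case
  proof (cases rule: CS_ax.cases)
    case (1 a b c)
    show ?thesis unfolding 1 unf.simps unf_lift unf_sw by (rule CS_subst[where k=0])
  qed
next
  case (o_Lam t s)
  show ?case unfolding unf.simps unf_lift unf_sw subst.simps
    by (simp only: oLam_subst[where k=0] One_nat_def)
qed simp

lemma unf_ctx_o: "ctx o_ax t u \<Longrightarrow> unf t = unf u"
  by (induct rule: ctx.induct) (auto simp: unf_o)

lemma unf_eqo: "eqo t u \<Longrightarrow> unf t = unf u"
  unfolding eqo_def
proof (induct rule: equivclp_induct)
  case (step y z)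
  then show ?case using unf_ctx_o by metis
qed simp

lemma ctx_mono: "ctx r t u \<Longrightarrow> (\<And>a b. r a b \<Longrightarrow> r' a b) \<Longrightarrow> ctx r' t u"
  by (induct rule: ctx.induct) (auto intro: ctx.intros)

lemma eqCS_eqo: "eqCS t u \<Longrightarrow> eqo t u"
  unfolding eqCS_def eqo_def
proof (induct rule: equivclp_induct)
  case (step y z)
  have "ctx o_ax y z \<or> ctx o_ax z y" using step(2) by (meson ctx_mono o_ax.o_CS)
  then show ?case using step(3) by (meson equivclp_into_equivclp)
qed simp


lemma lift_beta: "beta r s \<Longrightarrow> beta (lift i r) (lift i s)"
proof (induct arbitrary: i rule: beta.induct)
  case (beta_root t u)
  have "beta (App (Lam (lift (Suc i) t)) (lift i u)) (subst (lift (Suc i) t) 0 (lift i u))"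
    by (rule beta.beta_root)
  then show ?case by simp
qed (auto intro: beta.intros)

lemma subst_beta: "beta r s \<Longrightarrow> beta (subst r i t) (subst s i t)"
proof (induct arbitrary: i t rule: beta.induct)
  case (beta_root a b)
  have "beta (App (Lam (subst a (Suc i) (lift 0 t))) (subst b i t))
     (subst (subst a (Suc i) (lift 0 t)) 0 (subst b i t))"
    by (rule beta.beta_root)
  then show ?case by (simp add: subst_subst[of 0, simplified])
qed (auto intro: beta.intros)

lemma lift_beta_rtr: "beta\<^sup>*\<^sup>* r s \<Longrightarrow> beta\<^sup>*\<^sup>* (lift i r) (lift i s)"
  by (induct rule: rtranclp_induct) (auto intro: rtranclp.rtrancl_into_rtrancl lift_beta)

lemma subst_beta_rtr: "beta\<^sup>*\<^sup>* r s \<Longrightarrow> beta\<^sup>*\<^sup>* (subst r i t) (subst s i t)"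
  by (induct rule: rtranclp_induct) (auto intro: rtranclp.rtrancl_into_rtrancl subst_beta)

lemma subst_beta2: "is_lambda t \<Longrightarrow> beta r s \<Longrightarrow> beta\<^sup>*\<^sup>* (subst t i r) (subst t i s)"
proof (induct t arbitrary: i r s)
  case (Lam t)
  have "beta\<^sup>*\<^sup>* (subst t (Suc i) (lift 0 r)) (subst t (Suc i) (lift 0 s))"
    using Lam.hyps Lam.prems lift_beta by simp
  then show ?case by (simp add: rtr_Lam)
next
  case (App t1 t2)
  then show ?case by (auto intro: rtr_App)
qed auto

lemma subst_beta2_rtr: "beta\<^sup>*\<^sup>* r s \<Longrightarrow> is_lambda t \<Longrightarrow> beta\<^sup>*\<^sup>* (subst t i r) (subst t i s)"
  by (induct rule: rtranclp_induct) (auto intro: rtranclp_trans subst_beta2)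

inductive_cases ren_cases:
  "ren x y (Var i) s"
  "ren x y (Lam t) s"
  "ren x y (App t u) s"
  "ren x y (Sub t u) s"

lemma ren_refl: "ren x y t t"
  by (induct t arbitrary: x y) (auto intro: ren.intros)

lemma ren_lift: "ren x y b b' \<Longrightarrow> k \<le> x \<Longrightarrow> k \<le> y \<Longrightarrow> ren (Suc x) (Suc y) (lift k b) (lift k b')"
proof (induct arbitrary: k rule: ren.induct)
  case (ren_keep x y i)
  then show ?case by (auto intro: ren.intros)
next
  case (ren_repl x y)
  then show ?case by (auto intro: ren.intros)
qed (auto intro!: ren.intros)

lemma ren_subst: "ren x y a a' \<Longrightarrow> k < x \<Longrightarrow> k < y \<Longrightarrow> ren (x - 1) (y - 1) b b' \<Longrightarrow>
   ren (x - 1) (y - 1) (subst a k b) (subst a' k b')"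
proof (induct arbitrary: k b b' rule: ren.induct)
  case (ren_keep x y i)
  then show ?case by (auto intro: ren.intros)
next
  case (ren_repl x y)
  then show ?case using ren.ren_repl by auto
next
  case (ren_Lam x y t s)
  have "ren (Suc (x - 1)) (Suc (y - 1)) (lift 0 b) (lift 0 b')"
    using ren_lift[OF ren_Lam.prems(3)] by simp
  then have "ren (Suc x - 1) (Suc y - 1) (lift 0 b) (lift 0 b')" using ren_Lam.prems by simp
  from ren_Lam.hyps(2)[of "Suc k", OF _ _ this] ren_Lam.prems
  have "ren (Suc x - 1) (Suc y - 1) (subst t (Suc k) (lift 0 b)) (subst s (Suc k) (lift 0 b'))" by simp
  then show ?case using ren_Lam.prems by (auto intro!: ren.intros)
next
  case (ren_App x y t s u v)
  then show ?case by (auto intro!: ren.intros)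
next
  case (ren_Sub x y t s u v)
  have "ren (Suc (x - 1)) (Suc (y - 1)) (lift 0 b) (lift 0 b')"
    using ren_lift[OF ren_Sub.prems(3)] by simp
  then have "ren (Suc x - 1) (Suc y - 1) (lift 0 b) (lift 0 b')" using ren_Sub.prems by simp
  from ren_Sub.hyps(2)[of "Suc k", OF _ _ this] ren_Sub.prems
  have "ren (Suc x - 1) (Suc y - 1) (subst t (Suc k) (lift 0 b)) (subst s (Suc k) (lift 0 b'))" by simp
  then show ?case using ren_Sub.prems ren_Sub.hyps(4) by (auto intro!: ren.intros)
qed

lemma ren_unf: "ren x y t s \<Longrightarrow> ren x y (unf t) (unf s)"
proof (induct rule: ren.induct)
  case (ren_Sub x y t s u v)
  from ren_subst[OF ren_Sub(2), of 0 "unf u" "unf v"] ren_Sub(4)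
  show ?case by simp
qed (auto intro: ren.intros)

lemma ren_merge: "ren k (Suc k) (lift (Suc k) T) S \<Longrightarrow>
  subst (subst S k (lift k U)) k U = subst T k U"
proof (induct T arbitrary: k S U)
  case (Var i)
  then show ?case by (auto elim!: ren_cases)
next
  case (Lam T)
  from Lam.prems obtain S' where S: "S = Lam S'" "ren (Suc k) (Suc (Suc k)) (lift (Suc (Suc k)) T) S'"
    by (auto elim!: ren_cases)
  show ?case using Lam.hyps[OF S(2), of "lift 0 U"] S(1)
    by (simp add: lift_lift[of 0, simplified, symmetric])
next
  case (App T1 T2)
  then show ?case by (auto elim!: ren_cases)
next
  case (Sub T1 T2)
  from Sub.prems obtain S1 S2 where S: "S = Sub S1 S2" "ren (Suc k) (Suc (Suc k)) (lift (Suc (Suc k)) T1) S1"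
     "ren k (Suc k) (lift (Suc k) T2) S2"
    by (auto elim!: ren_cases)
  show ?case using Sub.hyps(1)[OF S(2), of "lift 0 U"] Sub.hyps(2)[OF S(3)] S(1)
    by (simp add: lift_lift[of 0, simplified, symmetric])
qed


lemma subs_snoc: "subs h (L @ [v]) = Sub (subs h L) v"
  by (induct L arbitrary: h) auto

lemma unf_subs: "\<exists>X. unf (subs (Lam t) L) = Lam X \<and>
   (\<forall>u. unf (subs (Sub t ((lift 0 ^^ length L) u)) L) = subst X 0 (unf u))"
proof (induct L rule: rev_induct)
  case Nil
  then show ?case by simp
next
  case (snoc v L)
  then obtain X where X: "unf (subs (Lam t) L) = Lam X"
    "\<And>u. unf (subs (Sub t ((lift 0 ^^ length L) u)) L) = subst X 0 (unf u)" by blast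
  have "unf (subs (Lam t) (L @ [v])) = Lam (subst X (Suc 0) (lift 0 (unf v)))"
    by (simp add: subs_snoc X)
  moreover have "unf (subs (Sub t ((lift 0 ^^ length (L @ [v])) u)) (L @ [v]))
     = subst (subst X (Suc 0) (lift 0 (unf v))) 0 (unf u)" for u
  proof -
    have "(lift 0 ^^ length (L @ [v])) u = (lift 0 ^^ length L) (lift 0 u)"
      by (simp only: length_append_singleton funpow_Suc_right comp_def)
    then have "unf (subs (Sub t ((lift 0 ^^ length (L @ [v])) u)) (L @ [v]))
        = subst (subst X 0 (lift 0 (unf u))) 0 (unf v)"
      by (simp add: subs_snoc X(2))
    also have "\<dots> = subst (subst X (Suc 0) (lift 0 (unf v))) 0 (subst (lift 0 (unf u)) 0 (unf v))"
      using subst_subst[of 0 0 X "unf v" "lift 0 (unf u)"] by simp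
    also have "\<dots> = subst (subst X (Suc 0) (lift 0 (unf v))) 0 (unf u)" by simp
    finally show ?thesis .
  qed
  ultimately show ?case by blast
qed

lemma root_beta: "lj_root t u \<Longrightarrow> beta\<^sup>*\<^sup>* (unf t) (unf u)"
proof (induct rule: lj_root.induct)
  case (dB t L u)
  obtain X where X: "unf (subs (Lam t) L) = Lam X"
    "\<And>u. unf (subs (Sub t ((lift 0 ^^ length L) u)) L) = subst X 0 (unf u)"
    using unf_subs by blast
  show ?case by (simp add: X beta.beta_root r_into_rtranclp)
next
  case (c t s u)
  have "ren 0 1 (lift 1 (unf t)) (unf s)" using ren_unf[OF c(2)] by simp
  then have "subst (subst (unf s) 0 (lift 0 (unf u))) 0 (unf u) = subst (unf t) 0 (unf u)"
    using ren_merge[of 0 "unf t" "unf s" "unf u"] by simp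
  then show ?case by simp
qed auto

lemma lj_beta: "lj t u \<Longrightarrow> beta\<^sup>*\<^sup>* (unf t) (unf u)"
  unfolding lj_def
proof (induct rule: ctx.induct)
  case (ctx_root t u) then show ?case by (rule root_beta)
next
  case (ctx_Lam t u) then show ?case by (simp add: rtr_Lam)
next
  case (ctx_AppL t u s) then show ?case by (simp add: rtr_AppL)
next
  case (ctx_AppR t u s) then show ?case by (simp add: rtr_AppR)
next
  case (ctx_SubL t u s) then show ?case by (simp add: subst_beta_rtr)
next
  case (ctx_SubR t u s) then show ?case by (simp add: subst_beta2_rtr)
qed

lemma occ_lift_eq [simp]: "occ k (lift k t) = 0"
  by (induct t arbitrary: k) auto

lemma occ_lift_lt: "j < k \<Longrightarrow> occ j (lift k t) = occ j t"
  by (induct t arbitrary: j k) auto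

lemma occ_subst_lift: "occ j (subst S j (lift j U)) = occ (Suc j) S"
  by (induct S arbitrary: j U) (auto simp: lift_lift[of 0, simplified, symmetric])

lemma ren_exists: "occ x t \<ge> 1 \<Longrightarrow> x \<noteq> y \<Longrightarrow>
  \<exists>s. ren x y t s \<and> Suc (occ x s) = occ x t \<and> occ y s = Suc (occ y t)"
proof (induct t arbitrary: x y)
  case (Var i)
  from Var.prems have "i = x" by (simp split: if_splits)
  then show ?case using Var.prems ren.ren_repl[of x y] by (intro exI[of _ "Var y"]) simp
next
  case (Lam t)
  have "occ (Suc x) t \<ge> 1" "Suc x \<noteq> Suc y" using Lam.prems by simp_all
  from Lam.hyps[OF this] obtain s where "ren (Suc x) (Suc y) t s" "Suc (occ (Suc x) s) = occ (Suc x) t"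
    "occ (Suc y) s = Suc (occ (Suc y) t)" by blast
  then show ?case using ren.ren_Lam by (intro exI[of _ "Lam s"]) simp
next
  case (App t1 t2)
  show ?case
  proof (cases "occ x t1 \<ge> 1")
    case True
    then obtain s where "ren x y t1 s" "Suc (occ x s) = occ x t1" "occ y s = Suc (occ y t1)"
      using App by blast
    then show ?thesis using ren.ren_App[of x y t1 s t2 t2] ren_refl[of x y t2]
      by (intro exI[of _ "App s t2"]) simp
  next
    case False
    then have "occ x t2 \<ge> 1" using App.prems by simp
    then obtain s where "ren x y t2 s" "Suc (occ x s) = occ x t2" "occ y s = Suc (occ y t2)"
      using App by blast
    then show ?thesis using False ren.ren_App[of x y t1 t1 t2 s] ren_refl[of x y t1]
      by (intro exI[of _ "App t1 s"]) simp
  qed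
next
  case (Sub t1 t2)
  show ?case
  proof (cases "occ (Suc x) t1 \<ge> 1")
    case True
    have "Suc x \<noteq> Suc y" using Sub.prems by simp
    from Sub.hyps(1)[OF True this] obtain s where "ren (Suc x) (Suc y) t1 s" "Suc (occ (Suc x) s) = occ (Suc x) t1"
      "occ (Suc y) s = Suc (occ (Suc y) t1)" by blast
    then show ?thesis using ren.ren_Sub[of x y t1 s t2 t2] ren_refl[of x y t2]
      by (intro exI[of _ "Sub s t2"]) simp
  next
    case False
    then have "occ x t2 \<ge> 1" using Sub.prems by simp
    then obtain s where "ren x y t2 s" "Suc (occ x s) = occ x t2" "occ y s = Suc (occ y t2)"
      using Sub by blast
    then show ?thesis using False ren.ren_Sub[of x y t1 t1 t2 s] ren_refl[of "Suc x" "Suc y" t1]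
      by (intro exI[of _ "Sub t1 s"]) simp
  qed
qed

lemma ctx_rtr_Lam: "(ctx r)\<^sup>*\<^sup>* t u \<Longrightarrow> (ctx r)\<^sup>*\<^sup>* (Lam t) (Lam u)"
  by (induct rule: rtranclp_induct) (auto intro: rtranclp.rtrancl_into_rtrancl ctx.intros)
lemma ctx_rtr_AppL: "(ctx r)\<^sup>*\<^sup>* t u \<Longrightarrow> (ctx r)\<^sup>*\<^sup>* (App t s) (App u s)"
  by (induct rule: rtranclp_induct) (auto intro: rtranclp.rtrancl_into_rtrancl ctx.intros)
lemma ctx_rtr_AppR: "(ctx r)\<^sup>*\<^sup>* t u \<Longrightarrow> (ctx r)\<^sup>*\<^sup>* (App s t) (App s u)"
  by (induct rule: rtranclp_induct) (auto intro: rtranclp.rtrancl_into_rtrancl ctx.intros)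
lemma ctx_rtr_SubL: "(ctx r)\<^sup>*\<^sup>* t u \<Longrightarrow> (ctx r)\<^sup>*\<^sup>* (Sub t s) (Sub u s)"
  by (induct rule: rtranclp_induct) (auto intro: rtranclp.rtrancl_into_rtrancl ctx.intros)
lemma ctx_rtr_SubR: "(ctx r)\<^sup>*\<^sup>* t u \<Longrightarrow> (ctx r)\<^sup>*\<^sup>* (Sub s t) (Sub s u)"
  by (induct rule: rtranclp_induct) (auto intro: rtranclp.rtrancl_into_rtrancl ctx.intros)

lemma fullcomp_n: "\<forall>t u. occ 0 t = n \<longrightarrow> lj\<^sup>*\<^sup>* (Sub t u) (subst t 0 u)"
proof (induct n rule: less_induct)
  case (less n)
  show ?case
  proof (intro allI impI)
    fix t u assume n: "occ 0 t = n"
    show "lj\<^sup>*\<^sup>* (Sub t u) (subst t 0 u)"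
    proof (cases "n \<le> 1")
      case True
      then have "lj_root (Sub t u) (subst t 0 u)"
        using n lj_root.w lj_root.d by (cases n) auto
      then show ?thesis unfolding lj_def by (auto intro: ctx.intros)
    next
      case False
      have "occ 0 (lift 1 t) \<ge> 1" using False n occ_lift_lt[of 0 1 t] by simp
      then obtain s where s: "ren 0 1 (lift 1 t) s" "Suc (occ 0 s) = occ 0 (lift 1 t)"
        "occ 1 s = Suc (occ 1 (lift 1 t))" using ren_exists[of 0 "lift 1 t" 1] by auto
      have o0: "Suc (occ 0 s) = n" using s(2) n occ_lift_lt[of 0 1 t] by simp
      have o1: "occ 1 s = 1" using s(3) by simp
      have "lj_root (Sub t u) (Sub (Sub s (lift 0 u)) u)"
        using n False o0 o1 s(1) by (intro lj_root.c) auto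
      then have st1: "lj (Sub t u) (Sub (Sub s (lift 0 u)) u)" unfolding lj_def by (auto intro: ctx.intros)
      have "lj\<^sup>*\<^sup>* (Sub s (lift 0 u)) (subst s 0 (lift 0 u))" using less o0 by auto
      then have st2: "lj\<^sup>*\<^sup>* (Sub (Sub s (lift 0 u)) u) (Sub (subst s 0 (lift 0 u)) u)"
        unfolding lj_def by (rule ctx_rtr_SubL)
      have "occ 0 (subst s 0 (lift 0 u)) = 1" using occ_subst_lift[of 0 s u] o1 by simp
      have st3: "lj\<^sup>*\<^sup>* (Sub (subst s 0 (lift 0 u)) u) (subst (subst s 0 (lift 0 u)) 0 u)"
      proof -
        have "1 < n" using False by simp
        from less(1)[OF this] \<open>occ 0 (subst s 0 (lift 0 u)) = 1\<close> show ?thesis by blast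
      qed
      have "subst (subst s 0 (lift 0 u)) 0 u = subst t 0 u"
        using ren_merge[of 0 t s u] s(1) by simp
      then show ?thesis using st1 st2 st3 by (metis rtranclp_trans converse_rtranclp_into_rtranclp)
    qed
  qed
qed

lemma fullcomp: "lj\<^sup>*\<^sup>* (Sub t u) (subst t 0 u)"
  using fullcomp_n by blast

lemma lj_unf: "lj\<^sup>*\<^sup>* t (unf t)"
proof (induct t)
  case (Lam t) then show ?case unfolding lj_def by (simp add: ctx_rtr_Lam)
next
  case (App t1 t2) then show ?case unfolding lj_def
    by (metis unf.simps(3) ctx_rtr_AppL ctx_rtr_AppR rtranclp_trans)
next
  case (Sub t1 t2)
  have "lj\<^sup>*\<^sup>* (Sub t1 t2) (Sub (unf t1) (unf t2))" using Sub unfolding lj_def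
    by (metis ctx_rtr_SubL ctx_rtr_SubR rtranclp_trans)
  then show ?case using fullcomp by (simp add: rtranclp_trans)
qed simp

lemma beta_lj: "beta t u \<Longrightarrow> lj\<^sup>*\<^sup>* t u"
proof (induct rule: beta.induct)
  case (beta_root t u)
  have "lj_root (App (Lam t) u) (Sub t u)"
    using lj_root.dB[of t "[]" u] by simp
  then have "lj (App (Lam t) u) (Sub t u)" unfolding lj_def by (auto intro: ctx.intros)
  then show ?case using fullcomp by (meson converse_rtranclp_into_rtranclp)
next
  case (beta_Lam t u) then show ?case unfolding lj_def by (simp add: ctx_rtr_Lam)
next
  case (beta_AppL t u s) then show ?case unfolding lj_def by (simp add: ctx_rtr_AppL)
next
  case (beta_AppR t u s) then show ?case unfolding lj_def by (simp add: ctx_rtr_AppR)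
qed

lemma beta_lj_rtr: "beta\<^sup>*\<^sup>* t u \<Longrightarrow> lj\<^sup>*\<^sup>* t u"
  by (induct rule: rtranclp_induct) (auto intro: rtranclp_trans beta_lj)

lemma lj_mod_unf: "(\<And>a b. E a b \<Longrightarrow> unf a = unf b) \<Longrightarrow> lj_mod E t u \<Longrightarrow> beta\<^sup>*\<^sup>* (unf t) (unf u)"
  unfolding lj_mod_def by (metis lj_beta)

lemma lj_mod_unf_rtr: assumes e: "\<And>a b. E a b \<Longrightarrow> unf a = unf b"
  shows "(lj_mod E)\<^sup>*\<^sup>* t u \<Longrightarrow> beta\<^sup>*\<^sup>* (unf t) (unf u)"
proof (induct rule: rtranclp_induct)
  case (step y z) then show ?case using lj_mod_unf[of E y z, OF e] by (meson rtranclp_trans)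
qed simp

lemma lj_in_mod: "(\<And>a. E a a) \<Longrightarrow> lj\<^sup>*\<^sup>* t u \<Longrightarrow> (lj_mod E)\<^sup>*\<^sup>* t u"
  by (erule rtranclp_induct) (auto simp: lj_mod_def intro: rtranclp.rtrancl_into_rtrancl)

lemma conf_gen:
  assumes u: "\<And>a b. E a b \<Longrightarrow> unf a = unf b" and r: "\<And>a. E a a"
  shows "confluent_mod E (lj_mod E)"
  unfolding confluent_mod_def
proof (intro allI impI)
  fix t u1 u2 assume "(lj_mod E)\<^sup>*\<^sup>* t u1 \<and> (lj_mod E)\<^sup>*\<^sup>* t u2"
  then have "beta\<^sup>*\<^sup>* (unf t) (unf u1)" "beta\<^sup>*\<^sup>* (unf t) (unf u2)"
    using lj_mod_unf_rtr[OF u] by blast+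
  then obtain w where w: "beta\<^sup>*\<^sup>* (unf u1) w" "beta\<^sup>*\<^sup>* (unf u2) w"
    using beta_conf[OF unf_lam] by blast
  have h: "lj\<^sup>*\<^sup>* u1 w" "lj\<^sup>*\<^sup>* u2 w" using w lj_unf beta_lj_rtr by (meson rtranclp_trans)+
  have "(lj_mod E)\<^sup>*\<^sup>* u1 w" by (rule lj_in_mod[of E]) (rule r, rule h(1))
  moreover have "(lj_mod E)\<^sup>*\<^sup>* u2 w" by (rule lj_in_mod[of E]) (rule r, rule h(2))
  ultimately show "\<exists>v1 v2. (lj_mod E)\<^sup>*\<^sup>* u1 v1 \<and> (lj_mod E)\<^sup>*\<^sup>* u2 v2 \<and> E v1 v2"
    using r by blast
qed

theorem conf_CS: "confluent_mod eqCS (lj_mod eqCS)"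
proof (rule conf_gen)
  fix a b assume "eqCS a b" then show "unf a = unf b" by (intro unf_eqo eqCS_eqo)
next
  fix a show "eqCS a a" unfolding eqCS_def by simp
qed

theorem conf_o: "confluent_mod eqo (lj_mod eqo)"
proof (rule conf_gen)
  fix a b assume "eqo a b" then show "unf a = unf b" by (intro unf_eqo)
next
  fix a show "eqo a a" unfolding eqo_def by simp
qed


datatype ty = Base | Arr "ty multiset" ty

type_synonym cx = "nat \<Rightarrow> ty multiset"

definition e0 :: cx where "e0 = (\<lambda>_. {#})"
definition cp :: "cx \<Rightarrow> cx \<Rightarrow> cx" where "cp G D = (\<lambda>i. G i + D i)"
definition sing :: "nat \<Rightarrow> ty \<Rightarrow> cx" where "sing i s = (\<lambda>j. if j = i then {#s#} else {#})"
definition ins :: "nat \<Rightarrow> ty multiset \<Rightarrow> cx \<Rightarrow> cx" where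
  "ins k M G = (\<lambda>i. if i < k then G i else if i = k then M else G (i - 1))"
definition del :: "nat \<Rightarrow> cx \<Rightarrow> cx" where "del k G = (\<lambda>i. if i < k then G i else G (Suc i))"
definition swc :: "nat \<Rightarrow> cx \<Rightarrow> cx" where
  "swc k G = (\<lambda>i. if i = k then G (Suc k) else if i = Suc k then G k else G i)"

lemma cx_app: "e0 i = {#}" "cp G D i = G i + D i" "sing j s i = (if i = j then {#s#} else {#})"
  "ins k M G i = (if i < k then G i else if i = k then M else G (i - 1))"
  "del k G i = (if i < k then G i else G (Suc i))"
  "swc k G i = (if i = k then G (Suc k) else if i = Suc k then G k else G i)"
  by (simp_all add: e0_def cp_def sing_def ins_def del_def swc_def)

lemma cp_assoc: "cp (cp A B) C = cp A (cp B C)" by (rule ext) (simp add: cx_app ac_simps)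
lemma cp_comm: "cp A B = cp B A" by (rule ext) (simp add: cx_app ac_simps)
lemma cp_lcomm: "cp A (cp B C) = cp B (cp A C)" by (rule ext) (simp add: cx_app ac_simps)
lemma cp_e0 [simp]: "cp A e0 = A" "cp e0 A = A" by (rule ext, simp add: cx_app)+
lemma ins_cp: "ins k (M + N) (cp G D) = cp (ins k M G) (ins k N D)" by (rule ext) (simp add: cx_app)
lemma ins_e0 [simp]: "ins k {#} e0 = e0" by (rule ext) (simp add: cx_app)
lemma del_cp: "del k (cp G D) = cp (del k G) (del k D)" by (rule ext) (simp add: cx_app)
lemma del_e0 [simp]: "del k e0 = e0" by (rule ext) (simp add: cx_app)
lemma swc_cp: "swc k (cp G D) = cp (swc k G) (swc k D)" by (rule ext) (simp add: cx_app)
lemma ins_ins0: "ins (Suc k) N (ins 0 M G) = ins 0 M (ins k N G)" by (rule ext) (auto simp: cx_app)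
lemma del_ins0: "del (Suc k) (ins 0 M G) = ins 0 M (del k G)" by (rule ext) (auto simp: cx_app)
lemma del0_ins0 [simp]: "del 0 (ins 0 M G) = G" by (rule ext) (auto simp: cx_app)
lemma ins_del: "ins k (G k) (del k G) = G" by (rule ext) (auto simp: cx_app)
lemma swc_ins0: "swc (Suc k) (ins 0 M G) = ins 0 M (swc k G)" by (rule ext) (auto simp: cx_app)
lemma ins_sing: "ins k {#} (sing i s) = sing (if i < k then i else Suc i) s" by (rule ext) (auto simp: cx_app)
lemma del_sing: "i \<noteq> k \<Longrightarrow> del k (sing i s) = sing (if i < k then i else i - 1) s" by (rule ext) (auto simp: cx_app)
lemma del_sing_eq [simp]: "del k (sing k s) = e0" by (rule ext) (auto simp: cx_app)
lemma swc_sing: "swc k (sing i s) = sing (if i = k then Suc k else if i = Suc k then k else i) s"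
  by (rule ext) (auto simp: cx_app)
lemma ins0_e0: "ins 0 {#} e0 = e0" by simp

inductive tj :: "cx \<Rightarrow> trm \<Rightarrow> ty \<Rightarrow> nat \<Rightarrow> nat \<Rightarrow> bool"
  and tjs :: "cx \<Rightarrow> trm \<Rightarrow> ty multiset \<Rightarrow> nat \<Rightarrow> nat \<Rightarrow> bool" where
  tVar: "tj (cp (sing i s) G) (Var i) s 1 0"
| tLam: "tj (ins 0 M G) t T a b \<Longrightarrow> tj G (Lam t) (Arr M T) (Suc a) b"
| tApp: "tj G t (Arr M T) a b \<Longrightarrow> tjs D u M a' b' \<Longrightarrow> M \<noteq> {#} \<Longrightarrow>
     tj (cp G D) (App t u) T (Suc (a + a')) (b + b')"
| tApp0: "tj G t (Arr {#} T) a b \<Longrightarrow> tj D u s a' b' \<Longrightarrow>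
     tj (cp G D) (App t u) T (Suc (a + a')) (b + b')"
| tSub: "tj (ins 0 M G) t T a b \<Longrightarrow> tjs D u M a' b' \<Longrightarrow> M \<noteq> {#} \<Longrightarrow>
     tj (cp G D) (Sub t u) T (a + a') (b + b' + size M * size M)"
| tSub0: "tj (ins 0 {#} G) t T a b \<Longrightarrow> tj D u s a' b' \<Longrightarrow>
     tj (cp G D) (Sub t u) T (a + a') (b + b')"
| sNil: "tjs e0 u {#} 0 0"
| sAdd: "tj D1 u s a1 b1 \<Longrightarrow> tjs D2 u M a2 b2 \<Longrightarrow>
     tjs (cp D1 D2) u (add_mset s M) (a1 + a2) (b1 + b2)"

definition tjm :: "cx \<Rightarrow> trm \<Rightarrow> ty multiset \<Rightarrow> nat \<Rightarrow> nat \<Rightarrow> bool" where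
  "tjm D u M a b \<longleftrightarrow> (if M = {#} then (\<exists>s. tj D u s a b) else tjs D u M a b)"

lemma tVar': "tj (cp (sing i s) G) (Var i) s (Suc 0) 0"
  using tj_tjs.tVar by simp

lemma tj_Var: "tj G (Var i) s a b \<longleftrightarrow> (\<exists>G'. G = cp (sing i s) G') \<and> a = 1 \<and> b = 0"
  by (auto elim: tj.cases intro: tVar')

lemma tj_Lam: "tj G (Lam t) S a b \<longleftrightarrow> (\<exists>M T a1. S = Arr M T \<and> a = Suc a1 \<and> tj (ins 0 M G) t T a1 b)"
  by (auto elim: tj.cases intro: tj_tjs.intros)

lemma tj_App: "tj G (App t u) T a b \<longleftrightarrow> (\<exists>M G1 D a1 b1 a2 b2. G = cp G1 D \<and>
   tj G1 t (Arr M T) a1 b1 \<and> tjm D u M a2 b2 \<and> a = Suc (a1 + a2) \<and> b = b1 + b2)"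
  apply (rule iffI)
   apply (erule tj.cases; simp add: tjm_def; blast)
  by (auto simp: tjm_def split: if_splits intro: tj_tjs.intros)

lemma tj_Sub: "tj G (Sub t u) T a b \<longleftrightarrow> (\<exists>M G1 D a1 b1 a2 b2. G = cp G1 D \<and>
   tj (ins 0 M G1) t T a1 b1 \<and> tjm D u M a2 b2 \<and> a = a1 + a2 \<and> b = b1 + b2 + size M * size M)"
  apply (rule iffI)
   apply (erule tj.cases; simp add: tjm_def; blast)
  by (auto simp: tjm_def split: if_splits intro: tj_tjs.intros)

lemma tjs_empty: "tjs D u {#} a b \<longleftrightarrow> D = e0 \<and> a = 0 \<and> b = 0"
  by (auto elim: tjs.cases intro: tj_tjs.intros)

lemma tjs_pick: "tjs D u N a b \<Longrightarrow> s \<in># N \<Longrightarrow> \<exists>D1 D2 a1 b1 a2 b2. D = cp D1 D2 \<and>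
   tj D1 u s a1 b1 \<and> tjs D2 u (N - {#s#}) a2 b2 \<and> a = a1 + a2 \<and> b = b1 + b2"
proof (induct rule: tj_tjs.inducts(2)[where ?P1.0="\<lambda>_ _ _ _ _. True"])
  case (sAdd D1 u s' a1 b1 D2 M a2 b2)
  show ?case
  proof (cases "s = s'")
    case True
    then show ?thesis using sAdd(1,3) by (rule_tac exI[of _ D1], rule_tac exI[of _ D2]) (simp, blast)
  next
    case False
    then have "s \<in># M" using sAdd.prems by simp
    then obtain E1 E2 c1 d1 c2 d2 where E: "D2 = cp E1 E2" "tj E1 u s c1 d1" "tjs E2 u (M - {#s#}) c2 d2"
      "a2 = c1 + c2" "b2 = d1 + d2" using sAdd.hyps(4) by blast
    have "tjs (cp D1 E2) u (add_mset s' (M - {#s#})) (a1 + c2) (b1 + d2)"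
      using sAdd.hyps(1) E(3) by (rule tj_tjs.sAdd)
    moreover have "add_mset s' (M - {#s#}) = add_mset s' M - {#s#}" using False by simp
    moreover have "cp D1 D2 = cp E1 (cp D1 E2)" using E(1) by (simp add: cp_lcomm)
    ultimately show ?thesis using E by (rule_tac exI[of _ E1], rule_tac exI[of _ "cp D1 E2"])
       (simp, intro exI conjI, assumption, assumption, simp, simp)
  qed
qed auto

lemma tjs_add: "tjs D u (add_mset s M) a b \<longleftrightarrow> (\<exists>D1 D2 a1 b1 a2 b2. D = cp D1 D2 \<and>
   tj D1 u s a1 b1 \<and> tjs D2 u M a2 b2 \<and> a = a1 + a2 \<and> b = b1 + b2)"
proof
  assume "tjs D u (add_mset s M) a b"
  from tjs_pick[OF this, of s] show "\<exists>D1 D2 a1 b1 a2 b2. D = cp D1 D2 \<and>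
   tj D1 u s a1 b1 \<and> tjs D2 u M a2 b2 \<and> a = a1 + a2 \<and> b = b1 + b2" by simp
next
  assume "\<exists>D1 D2 a1 b1 a2 b2. D = cp D1 D2 \<and>
   tj D1 u s a1 b1 \<and> tjs D2 u M a2 b2 \<and> a = a1 + a2 \<and> b = b1 + b2"
  then show "tjs D u (add_mset s M) a b" by (auto intro: tj_tjs.intros)
qed

lemma tjs_single: "tjs D u {#s#} a b \<longleftrightarrow> tj D u s a b"
  by (auto simp: tjs_add tjs_empty intro: exI[of _ e0])

lemma tjs_union: "tjs D1 u M1 a1 b1 \<Longrightarrow> tjs D2 u M2 a2 b2 \<Longrightarrow> tjs (cp D1 D2) u (M1 + M2) (a1 + a2) (b1 + b2)"
proof (induct M1 arbitrary: D1 a1 b1)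
  case empty then show ?case by (simp add: tjs_empty)
next
  case (add s M1)
  from add.prems(1) obtain E1 E2 c1 d1 c2 d2 where E: "D1 = cp E1 E2" "tj E1 u s c1 d1" "tjs E2 u M1 c2 d2"
      "a1 = c1 + c2" "b1 = d1 + d2" by (auto simp: tjs_add)
  have "tjs (cp E2 D2) u (M1 + M2) (c2 + a2) (d2 + b2)" using add.hyps E(3) add.prems(2) by blast
  from tj_tjs.sAdd[OF E(2) this] show ?case using E by (simp add: cp_assoc add.assoc)
qed

lemma tjs_split: "tjs D u (M1 + M2) a b \<Longrightarrow> \<exists>D1 D2 a1 b1 a2 b2. D = cp D1 D2 \<and>
   tjs D1 u M1 a1 b1 \<and> tjs D2 u M2 a2 b2 \<and> a = a1 + a2 \<and> b = b1 + b2"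
proof (induct M1 arbitrary: D a b)
  case empty then show ?case by (auto simp: tjs_empty intro!: exI[of _ e0])
next
  case (add s M1)
  from add.prems obtain E1 E2 c1 d1 c2 d2 where E: "D = cp E1 E2" "tj E1 u s c1 d1" "tjs E2 u (M1 + M2) c2 d2"
      "a = c1 + c2" "b = d1 + d2" by (auto simp: tjs_add)
  from add.hyps[OF E(3)] obtain F1 F2 e1 f1 e2 f2 where F: "E2 = cp F1 F2" "tjs F1 u M1 e1 f1"
    "tjs F2 u M2 e2 f2" "c2 = e1 + e2" "d2 = f1 + f2" by blast
  have "tjs (cp E1 F1) u (add_mset s M1) (c1 + e1) (d1 + f1)" using E(2) F(2) by (rule tj_tjs.sAdd)
  then show ?case using E F by (rule_tac exI[of _ "cp E1 F1"], rule_tac exI[of _ F2])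
     (simp add: cp_assoc, intro exI conjI, assumption, assumption, simp, simp)
qed


lemma weak: "tj G t T a b \<Longrightarrow> tj (cp G H) t T a b" "tjs D u M a b \<Longrightarrow> True"
proof (induct arbitrary: H rule: tj_tjs.inducts)
  case (tVar i s G)
  then show ?case using tj_tjs.tVar[of i s "cp G H"] by (simp add: cp_assoc)
next
  case (tLam M G t T a b)
  have "tj (cp (ins 0 M G) (ins 0 {#} H)) t T a b" by (rule tLam.hyps)
  then have "tj (ins 0 M (cp G H)) t T a b" using ins_cp[of 0 M "{#}" G H] by simp
  then show ?case by (rule tj_tjs.tLam)
next
  case (tApp G t M T a b D u a' b')
  have "tj (cp (cp G H) D) (App t u) T (Suc (a + a')) (b + b')"
    using tApp.hyps(2)[of H] tApp.hyps(3,5) by (rule tj_tjs.tApp)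
  then show ?case by (simp add: cp_assoc cp_comm cp_lcomm)
next
  case (tApp0 G t T a b D u s a' b')
  have "tj (cp (cp G H) D) (App t u) T (Suc (a + a')) (b + b')"
    using tApp0.hyps(2)[of H] tApp0.hyps(3) by (rule tj_tjs.tApp0)
  then show ?case by (simp add: cp_assoc cp_comm cp_lcomm)
next
  case (tSub M G t T a b D u a' b')
  have "tj (cp (ins 0 M G) (ins 0 {#} H)) t T a b" by (rule tSub.hyps)
  then have "tj (ins 0 M (cp G H)) t T a b" using ins_cp[of 0 M "{#}" G H] by simp
  then have "tj (cp (cp G H) D) (Sub t u) T (a + a') (b + b' + size M * size M)"
    using tSub.hyps(3,5) by (rule tj_tjs.tSub)
  then show ?case by (simp add: cp_assoc cp_comm cp_lcomm)
next
  case (tSub0 G t T a b D u s a' b')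
  have "tj (cp (ins 0 {#} G) (ins 0 {#} H)) t T a b" by (rule tSub0.hyps)
  then have "tj (ins 0 {#} (cp G H)) t T a b" using ins_cp[of 0 "{#}" "{#}" G H] by simp
  then have "tj (cp (cp G H) D) (Sub t u) T (a + a') (b + b')"
    using tSub0.hyps(3) by (rule tj_tjs.tSub0)
  then show ?case by (simp add: cp_assoc cp_comm cp_lcomm)
qed auto

lemma weak_le: "tj G t T a b \<Longrightarrow> (\<And>i. G i \<subseteq># G' i) \<Longrightarrow> tj G' t T a b"
proof -
  assume t: "tj G t T a b" and le: "\<And>i. G i \<subseteq># G' i"
  have "G' = cp G (\<lambda>i. G' i - G i)" using le by (intro ext) (simp add: cx_app subset_mset.add_diff_inverse)
  then show ?thesis using weak(1)[OF t] by metis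
qed

lemma tj_lift: "tj G t T a b \<Longrightarrow> tj (ins k {#} G) (lift k t) T a b"
  "tjs D u M a b \<Longrightarrow> tjs (ins k {#} D) (lift k u) M a b"
proof (induct arbitrary: k and k rule: tj_tjs.inducts)
  case (tVar i s G)
  have "ins k {#} (cp (sing i s) G) = cp (sing (if i < k then i else Suc i) s) (ins k {#} G)"
    using ins_cp[of k "{#}" "{#}" "sing i s" G] by (simp add: ins_sing)
  then show ?case using tj_tjs.tVar by (simp split: if_splits)
next
  case (tLam M G t T a b)
  have "tj (ins (Suc k) {#} (ins 0 M G)) (lift (Suc k) t) T a b" by (rule tLam.hyps)
  then show ?case by (simp add: ins_ins0 tj_tjs.tLam)
next
  case (tApp G t M T a b D u a' b')
  show ?case using tj_tjs.tApp[OF tApp.hyps(2) tApp.hyps(4) tApp.hyps(5)]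
    by (simp add: ins_cp[of k "{#}" "{#}", simplified])
next
  case (tApp0 G t T a b D u s a' b')
  show ?case using tj_tjs.tApp0[OF tApp0.hyps(2) tApp0.hyps(4)]
    by (simp add: ins_cp[of k "{#}" "{#}", simplified])
next
  case (tSub M G t T a b D u a' b')
  have "tj (ins (Suc k) {#} (ins 0 M G)) (lift (Suc k) t) T a b" by (rule tSub.hyps)
  then have "tj (ins 0 M (ins k {#} G)) (lift (Suc k) t) T a b" by (simp add: ins_ins0)
  from tj_tjs.tSub[OF this tSub.hyps(4) tSub.hyps(5)] show ?case
    by (simp add: ins_cp[of k "{#}" "{#}", simplified])
next
  case (tSub0 G t T a b D u s a' b')
  have "tj (ins (Suc k) {#} (ins 0 {#} G)) (lift (Suc k) t) T a b" by (rule tSub0.hyps)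
  then have "tj (ins 0 {#} (ins k {#} G)) (lift (Suc k) t) T a b" by (simp add: ins_ins0)
  from tj_tjs.tSub0[OF this tSub0.hyps(4)] show ?case
    by (simp add: ins_cp[of k "{#}" "{#}", simplified])
next
  case (sNil u)
  then show ?case by (simp add: tj_tjs.sNil)
next
  case (sAdd D1 u s a1 b1 D2 M a2 b2)
  show ?case using tj_tjs.sAdd[OF sAdd.hyps(2) sAdd.hyps(4)]
    by (simp add: ins_cp[of k "{#}" "{#}", simplified])
qed


lemma lift_eqs:
  "Var i = lift k t \<longleftrightarrow> (\<exists>j. t = Var j \<and> i = (if j < k then j else Suc j))"
  "Lam s = lift k t \<longleftrightarrow> (\<exists>t0. t = Lam t0 \<and> s = lift (Suc k) t0)"
  "App s1 s2 = lift k t \<longleftrightarrow> (\<exists>t1 t2. t = App t1 t2 \<and> s1 = lift k t1 \<and> s2 = lift k t2)"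
  "Sub s1 s2 = lift k t \<longleftrightarrow> (\<exists>t1 t2. t = Sub t1 t2 \<and> s1 = lift (Suc k) t1 \<and> s2 = lift k t2)"
  by (cases t; auto)+

lemma tj_unlift: "tj G s T a b \<Longrightarrow> s = lift k t \<Longrightarrow> tj (del k G) t T a b"
  "tjs D s M a b \<Longrightarrow> s = lift k t \<Longrightarrow> tjs (del k D) t M a b"
proof (induct arbitrary: k t and k t rule: tj_tjs.inducts)
  case (tVar i s G)
  then obtain j where j: "t = Var j" "i = (if j < k then j else Suc j)" by (auto simp: lift_eqs)
  then have "del k (cp (sing i s) G) = cp (sing j s) (del k G)"
    by (auto simp: del_cp del_sing)
  then show ?case using j tj_tjs.tVar by simp
next
  case (tLam M G t0 T a b)
  then obtain t1 where t: "t = Lam t1" "t0 = lift (Suc k) t1" by (auto simp: lift_eqs)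
  have "tj (del (Suc k) (ins 0 M G)) t1 T a b" using tLam.hyps(2) t by blast
  then show ?case using t by (simp add: del_ins0 tj_tjs.tLam)
next
  case (tApp G t0 M T a b D u a' b')
  then obtain t1 t2 where t: "t = App t1 t2" "t0 = lift k t1" "u = lift k t2" by (auto simp: lift_eqs)
  from tj_tjs.tApp[OF tApp.hyps(2)[OF t(2)] tApp.hyps(4)[OF t(3)] tApp.hyps(5)] show ?case
    using t by (simp add: del_cp)
next
  case (tApp0 G t0 T a b D u s a' b')
  then obtain t1 t2 where t: "t = App t1 t2" "t0 = lift k t1" "u = lift k t2" by (auto simp: lift_eqs)
  from tj_tjs.tApp0[OF tApp0.hyps(2)[OF t(2)] tApp0.hyps(4)[OF t(3)]] show ?case
    using t by (simp add: del_cp)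
next
  case (tSub M G t0 T a b D u a' b')
  then obtain t1 t2 where t: "t = Sub t1 t2" "t0 = lift (Suc k) t1" "u = lift k t2" by (auto simp: lift_eqs)
  have "tj (del (Suc k) (ins 0 M G)) t1 T a b" using tSub.hyps(2) t by blast
  then have "tj (ins 0 M (del k G)) t1 T a b" by (simp add: del_ins0)
  from tj_tjs.tSub[OF this tSub.hyps(4)[OF t(3)] tSub.hyps(5)] show ?case
    using t by (simp add: del_cp)
next
  case (tSub0 G t0 T a b D u s a' b')
  then obtain t1 t2 where t: "t = Sub t1 t2" "t0 = lift (Suc k) t1" "u = lift k t2" by (auto simp: lift_eqs)
  have "tj (del (Suc k) (ins 0 {#} G)) t1 T a b" using tSub0.hyps(2) t by blast
  then have "tj (ins 0 {#} (del k G)) t1 T a b" by (simp add: del_ins0)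
  from tj_tjs.tSub0[OF this tSub0.hyps(4)[OF t(3)]] show ?case
    using t by (simp add: del_cp)
next
  case (sNil u)
  then show ?case by (simp add: tj_tjs.sNil)
next
  case (sAdd D1 u s a1 b1 D2 M a2 b2)
  from tj_tjs.sAdd[OF sAdd.hyps(2)[OF sAdd.prems] sAdd.hyps(4)[OF sAdd.prems]] show ?case
    by (simp add: del_cp)
qed

lemma tj_sw: "tj G t T a b \<Longrightarrow> tj (swc k G) (sw k t) T a b"
  "tjs D u M a b \<Longrightarrow> tjs (swc k D) (sw k u) M a b"
proof (induct arbitrary: k and k rule: tj_tjs.inducts)
  case (tVar i s G)
  have "swc k (cp (sing i s) G) = cp (sing (if i = k then Suc k else if i = Suc k then k else i) s) (swc k G)"
    by (simp add: swc_cp swc_sing)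
  then show ?case using tj_tjs.tVar by simp
next
  case (tLam M G t T a b)
  have "tj (swc (Suc k) (ins 0 M G)) (sw (Suc k) t) T a b" by (rule tLam.hyps)
  then show ?case by (simp add: swc_ins0 tj_tjs.tLam)
next
  case (tApp G t M T a b D u a' b')
  show ?case using tj_tjs.tApp[OF tApp.hyps(2) tApp.hyps(4) tApp.hyps(5)] by (simp add: swc_cp)
next
  case (tApp0 G t T a b D u s a' b')
  show ?case using tj_tjs.tApp0[OF tApp0.hyps(2) tApp0.hyps(4)] by (simp add: swc_cp)
next
  case (tSub M G t T a b D u a' b')
  have "tj (swc (Suc k) (ins 0 M G)) (sw (Suc k) t) T a b" by (rule tSub.hyps)
  then have "tj (ins 0 M (swc k G)) (sw (Suc k) t) T a b" by (simp add: swc_ins0)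
  from tj_tjs.tSub[OF this tSub.hyps(4) tSub.hyps(5)] show ?case by (simp add: swc_cp)
next
  case (tSub0 G t T a b D u s a' b')
  have "tj (swc (Suc k) (ins 0 {#} G)) (sw (Suc k) t) T a b" by (rule tSub0.hyps)
  then have "tj (ins 0 {#} (swc k G)) (sw (Suc k) t) T a b" by (simp add: swc_ins0)
  from tj_tjs.tSub0[OF this tSub0.hyps(4)] show ?case by (simp add: swc_cp)
next
  case (sNil u)
  have "swc k e0 = e0" by (rule ext) (simp add: cx_app)
  then show ?case by (simp add: tj_tjs.sNil)
next
  case (sAdd D1 u s a1 b1 D2 M a2 b2)
  show ?case using tj_tjs.sAdd[OF sAdd.hyps(2) sAdd.hyps(4)] by (simp add: swc_cp)
qed

lemma le_mult_size: "M \<noteq> {#} \<Longrightarrow> (n::nat) \<le> n * size M"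
  by (cases M) auto

lemma tj_occ: "tj G t T a b \<Longrightarrow> occ k t \<le> size (G k)"
  "tjs D u M a b \<Longrightarrow> occ k u * size M \<le> size (D k)"
proof (induct arbitrary: k and k rule: tj_tjs.inducts)
  case (tApp G t M T a b D u a' b')
  have "occ k u \<le> occ k u * size M" using tApp.hyps(5) by (rule le_mult_size)
  then have "occ k u \<le> size (D k)" using tApp.hyps(4)[of k] by (rule le_trans)
  then show ?case using tApp.hyps(2)[of k] by (simp add: cx_app)
next
  case (tLam M G t T a b)
  then show ?case using tLam.hyps(2)[of "Suc k"] by (simp add: cx_app)
next
  case (tSub M G t T a b D u a' b')
  have "occ k u \<le> occ k u * size M" using tSub.hyps(5) by (rule le_mult_size)
  then have "occ k u \<le> size (D k)" using tSub.hyps(4)[of k] by (rule le_trans)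
  then show ?case using tSub.hyps(2)[of "Suc k"] by (simp add: cx_app)
next
  case (tSub0 G t T a b D u s a' b')
  then show ?case using tSub0.hyps(2)[of "Suc k"] tSub0.hyps(4)[of k] by (simp add: cx_app add_mono)
next
  case (tApp0 G t T a b D u s a' b')
  then show ?case using tApp0.hyps(2)[of k] tApp0.hyps(4)[of k] by (simp add: cx_app add_mono)
next
  case (sAdd D1 u s a1 b1 D2 M a2 b2)
  then show ?case using sAdd.hyps(2)[of k] sAdd.hyps(4)[of k] by (simp add: cx_app add_mono)
qed (auto simp: cx_app)

lemma tj_pos: "tj G t T a b \<Longrightarrow> 1 \<le> a" "tjs D u M a b \<Longrightarrow> size M \<le> a"
  by (induct rule: tj_tjs.inducts) auto

lemma tj_erase: "tj G t T a b \<Longrightarrow> occ k t = 0 \<Longrightarrow> tj (del k G) (subst t k u) T a b"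
  "tjs D t M a b \<Longrightarrow> occ k t = 0 \<Longrightarrow> tjs (del k D) (subst t k u) M a b"
proof (induct arbitrary: k u and k u rule: tj_tjs.inducts)
  case (tVar i s G)
  then have "i \<noteq> k" by (simp split: if_splits)
  then have "del k (cp (sing i s) G) = cp (sing (if i < k then i else i - 1) s) (del k G)"
    by (simp add: del_cp del_sing)
  then show ?case using tj_tjs.tVar \<open>i \<noteq> k\<close> by simp
next
  case (tLam M G t T a b)
  have "tj (del (Suc k) (ins 0 M G)) (subst t (Suc k) (lift 0 u)) T a b"
    using tLam by simp
  then show ?case by (simp add: del_ins0 tj_tjs.tLam)
next
  case (tApp G t M T a b D u' a' b')
  show ?case using tj_tjs.tApp[OF tApp.hyps(2) tApp.hyps(4) tApp.hyps(5)] tApp.prems by (simp add: del_cp)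
next
  case (tApp0 G t T a b D u' s a' b')
  show ?case using tj_tjs.tApp0[OF tApp0.hyps(2) tApp0.hyps(4)] tApp0.prems by (simp add: del_cp)
next
  case (tSub M G t T a b D u' a' b')
  have "tj (del (Suc k) (ins 0 M G)) (subst t (Suc k) (lift 0 u)) T a b" using tSub by simp
  then have "tj (ins 0 M (del k G)) (subst t (Suc k) (lift 0 u)) T a b" by (simp add: del_ins0)
  from tj_tjs.tSub[OF this tSub.hyps(4) tSub.hyps(5)] tSub.prems show ?case by (simp add: del_cp)
next
  case (tSub0 G t T a b D u' s a' b')
  have "tj (del (Suc k) (ins 0 {#} G)) (subst t (Suc k) (lift 0 u)) T a b" using tSub0 by simp
  then have "tj (ins 0 {#} (del k G)) (subst t (Suc k) (lift 0 u)) T a b" by (simp add: del_ins0)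
  from tj_tjs.tSub0[OF this tSub0.hyps(4)] tSub0.prems show ?case by (simp add: del_cp)
next
  case (sNil t)
  then show ?case by (simp add: tj_tjs.sNil)
next
  case (sAdd D1 t s a1 b1 D2 M a2 b2)
  show ?case using tj_tjs.sAdd[OF sAdd.hyps(2)[OF sAdd.prems] sAdd.hyps(4)[OF sAdd.prems]] by (simp add: del_cp)
qed


lemma upd_ins0: "(ins 0 M G)(Suc x := A, Suc y := B) = ins 0 M (G(x := A, y := B))"
  by (rule ext) (auto simp: cx_app)
lemma upd_cp: "x \<noteq> y \<Longrightarrow> (cp G D)(x := A1 + B1, y := A2 + B2) = cp (G(x := A1, y := A2)) (D(x := B1, y := B2))"
  by (rule ext) (auto simp: cx_app)
lemma upd_keep: "G y = {#} \<Longrightarrow> G(x := G x, y := {#}) = G"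
  by (rule ext) auto
lemma upd_repl: "x \<noteq> y \<Longrightarrow> G y = {#} \<Longrightarrow> (cp (sing x s) G)(x := G x, y := {#s#}) = cp (sing y s) G"
  by (rule ext) (auto simp: cx_app)
lemma upd_e0: "e0(x := {#}, y := {#}) = e0"
  by (rule ext) (auto simp: cx_app)

lemma tj_ren: "tj G t T a b \<Longrightarrow> ren x y t s \<Longrightarrow> G y = {#} \<Longrightarrow> x \<noteq> y \<Longrightarrow>
    \<exists>M1 M2. G x = M1 + M2 \<and> tj (G(x := M1, y := M2)) s T a b"
  "tjs D u M a b \<Longrightarrow> ren x y u v \<Longrightarrow> D y = {#} \<Longrightarrow> x \<noteq> y \<Longrightarrow>
    \<exists>N1 N2. D x = N1 + N2 \<and> tjs (D(x := N1, y := N2)) v M a b"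
proof (induct arbitrary: x y s and x y v rule: tj_tjs.inducts)
  case (tVar i s0 G)
  from tVar.prems(1) show ?case
  proof (cases rule: ren.cases)
    case ren_keep
    have e: "(cp (sing i s0) G)(x := cp (sing i s0) G x, y := {#}) = cp (sing i s0) G"
      using tVar.prems(2) by (rule upd_keep)
    show ?thesis
      apply (rule exI[of _ "cp (sing i s0) G x"], rule exI[of _ "{#}"])
      apply (rule conjI, simp)
      apply (subst e) using ren_keep tj_tjs.tVar[of i s0 G] by simp
  next
    case ren_repl
    have "G y = {#}" using tVar.prems(2) by (simp add: cx_app)
    have "(cp (sing x s0) G)(x := G x, y := {#s0#}) = cp (sing y s0) G"
      using tVar.prems(3) \<open>G y = {#}\<close> by (rule upd_repl)
    note e = this
    have gx: "cp (sing x s0) G x = G x + {#s0#}" by (simp add: cx_app)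
    show ?thesis
      apply (rule exI[of _ "G x"], rule exI[of _ "{#s0#}"])
      apply (rule conjI)
      using ren_repl gx apply simp
      using ren_repl apply (simp only:)
      apply (subst e) using tj_tjs.tVar[of y s0 G] by simp
  qed
next
  case (tLam M G t T a b)
  from tLam.prems(1) obtain s' where s: "s = Lam s'" "ren (Suc x) (Suc y) t s'"
    by (auto elim: ren.cases)
  have "ins 0 M G (Suc y) = {#}" using tLam.prems(2) by (simp add: cx_app)
  moreover have "Suc x \<noteq> Suc y" using tLam.prems(3) by simp
  ultimately have "\<exists>M1 M2. ins 0 M G (Suc x) = M1 + M2 \<and> tj ((ins 0 M G)(Suc x := M1, Suc y := M2)) s' T a b"
    using tLam.hyps(2)[OF s(2)] by blast
  then obtain M1 M2 where
    m: "ins 0 M G (Suc x) = M1 + M2" "tj ((ins 0 M G)(Suc x := M1, Suc y := M2)) s' T a b" by blast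
  have c: "tj (G(x := M1, y := M2)) (Lam s') (Arr M T) (Suc a) b"
    using m(2) unfolding upd_ins0 by (rule tj_tjs.tLam)
  have "G x = M1 + M2" using m(1) by (simp add: cx_app)
  then show ?case using c s by blast
next
  case (tApp G t M T a b D u a' b')
  from tApp.prems(1) obtain s1 s2 where s: "s = App s1 s2" "ren x y t s1" "ren x y u s2"
    by (auto elim: ren.cases)
  have y: "G y = {#}" "D y = {#}" using tApp.prems(2) by (auto simp: cx_app)
  from tApp.hyps(2)[OF s(2) y(1) tApp.prems(3)] obtain A1 A2 where
    A: "G x = A1 + A2" "tj (G(x := A1, y := A2)) s1 (Arr M T) a b" by blast
  from tApp.hyps(4)[OF s(3) y(2) tApp.prems(3)] obtain B1 B2 where
    B: "D x = B1 + B2" "tjs (D(x := B1, y := B2)) s2 M a' b'" by blast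
  have c: "tj ((cp G D)(x := A1 + B1, y := A2 + B2)) (App s1 s2) T (Suc (a + a')) (b + b')"
    unfolding upd_cp[OF tApp.prems(3)] by (rule tj_tjs.tApp[OF A(2) B(2) tApp.hyps(5)])
  have "cp G D x = (A1 + B1) + (A2 + B2)" using A(1) B(1) by (simp add: cx_app ac_simps)
  then show ?case using c s by blast
next
  case (tApp0 G t T a b D u s0 a' b')
  from tApp0.prems(1) obtain s1 s2 where s: "s = App s1 s2" "ren x y t s1" "ren x y u s2"
    by (auto elim: ren.cases)
  have y: "G y = {#}" "D y = {#}" using tApp0.prems(2) by (auto simp: cx_app)
  from tApp0.hyps(2)[OF s(2) y(1) tApp0.prems(3)] obtain A1 A2 where
    A: "G x = A1 + A2" "tj (G(x := A1, y := A2)) s1 (Arr {#} T) a b" by blast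
  from tApp0.hyps(4)[OF s(3) y(2) tApp0.prems(3)] obtain B1 B2 where
    B: "D x = B1 + B2" "tj (D(x := B1, y := B2)) s2 s0 a' b'" by blast
  have c: "tj ((cp G D)(x := A1 + B1, y := A2 + B2)) (App s1 s2) T (Suc (a + a')) (b + b')"
    unfolding upd_cp[OF tApp0.prems(3)] by (rule tj_tjs.tApp0[OF A(2) B(2)])
  have "cp G D x = (A1 + B1) + (A2 + B2)" using A(1) B(1) by (simp add: cx_app ac_simps)
  then show ?case using c s by blast
next
  case (tSub M G t T a b D u a' b')
  from tSub.prems(1) obtain s1 s2 where s: "s = Sub s1 s2" "ren (Suc x) (Suc y) t s1" "ren x y u s2"
    by (auto elim: ren.cases)
  have y: "ins 0 M G (Suc y) = {#}" "D y = {#}" using tSub.prems(2) by (auto simp: cx_app)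
  have "Suc x \<noteq> Suc y" using tSub.prems(3) by simp
  with tSub.hyps(2)[OF s(2) y(1)] obtain A1 A2 where
    A: "ins 0 M G (Suc x) = A1 + A2" "tj ((ins 0 M G)(Suc x := A1, Suc y := A2)) s1 T a b" by blast
  from tSub.hyps(4)[OF s(3) y(2) tSub.prems(3)] obtain B1 B2 where
    B: "D x = B1 + B2" "tjs (D(x := B1, y := B2)) s2 M a' b'" by blast
  have A2: "tj (ins 0 M (G(x := A1, y := A2))) s1 T a b" using A(2) by (simp add: upd_ins0)
  have c: "tj ((cp G D)(x := A1 + B1, y := A2 + B2)) (Sub s1 s2) T (a + a') (b + b' + size M * size M)"
    unfolding upd_cp[OF tSub.prems(3)] by (rule tj_tjs.tSub[OF A2 B(2) tSub.hyps(5)])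
  have "cp G D x = (A1 + B1) + (A2 + B2)" using A(1) B(1) by (simp add: cx_app ac_simps)
  then show ?case using c s by blast
next
  case (tSub0 G t T a b D u s0 a' b')
  from tSub0.prems(1) obtain s1 s2 where s: "s = Sub s1 s2" "ren (Suc x) (Suc y) t s1" "ren x y u s2"
    by (auto elim: ren.cases)
  have y: "ins 0 {#} G (Suc y) = {#}" "D y = {#}" using tSub0.prems(2) by (auto simp: cx_app)
  have "Suc x \<noteq> Suc y" using tSub0.prems(3) by simp
  with tSub0.hyps(2)[OF s(2) y(1)] obtain A1 A2 where
    A: "ins 0 {#} G (Suc x) = A1 + A2" "tj ((ins 0 {#} G)(Suc x := A1, Suc y := A2)) s1 T a b" by blast
  from tSub0.hyps(4)[OF s(3) y(2) tSub0.prems(3)] obtain B1 B2 where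
    B: "D x = B1 + B2" "tj (D(x := B1, y := B2)) s2 s0 a' b'" by blast
  have A2: "tj (ins 0 {#} (G(x := A1, y := A2))) s1 T a b" using A(2) by (simp add: upd_ins0)
  have c: "tj ((cp G D)(x := A1 + B1, y := A2 + B2)) (Sub s1 s2) T (a + a') (b + b')"
    unfolding upd_cp[OF tSub0.prems(3)] by (rule tj_tjs.tSub0[OF A2 B(2)])
  have "cp G D x = (A1 + B1) + (A2 + B2)" using A(1) B(1) by (simp add: cx_app ac_simps)
  then show ?case using c s by blast
next
  case (sNil u)
  have "tjs (e0(x := {#}, y := {#})) v {#} 0 0" unfolding upd_e0 by (rule tj_tjs.sNil)
  moreover have "e0 x = {#} + {#}" by (simp add: e0_def)
  ultimately show ?case by blast
next
  case (sAdd D1 u s0 a1 b1 D2 M a2 b2)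
  have y: "D1 y = {#}" "D2 y = {#}" using sAdd.prems(2) by (auto simp: cx_app)
  from sAdd.hyps(2)[OF sAdd.prems(1) y(1) sAdd.prems(3)] obtain A1 A2 where
    A: "D1 x = A1 + A2" "tj (D1(x := A1, y := A2)) v s0 a1 b1" by blast
  from sAdd.hyps(4)[OF sAdd.prems(1) y(2) sAdd.prems(3)] obtain B1 B2 where
    B: "D2 x = B1 + B2" "tjs (D2(x := B1, y := B2)) v M a2 b2" by blast
  have c: "tjs ((cp D1 D2)(x := A1 + B1, y := A2 + B2)) v (add_mset s0 M) (a1 + a2) (b1 + b2)"
    unfolding upd_cp[OF sAdd.prems(3)] by (rule tj_tjs.sAdd[OF A(2) B(2)])
  have "cp D1 D2 x = (A1 + B1) + (A2 + B2)" using A(1) B(1) by (simp add: cx_app ac_simps)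
  then show ?case using c by blast
qed


lemma ins0_Suc [simp]: "ins 0 M G (Suc k) = G k" by (simp add: cx_app)
lemma ins0_0 [simp]: "ins 0 M G 0 = M" by (simp add: cx_app)
lemma cp_at: "cp G D k = G k + D k" by (simp add: cx_app)
lemma e0_at: "e0 k = {#}" by (simp add: cx_app)
lemma sing_at: "sing j s i = (if i = j then {#s#} else {#})" by (simp add: cx_app)

lemma tj_subst: "tj G t T a b \<Longrightarrow> tjs E v (G k) c d \<Longrightarrow>
    \<exists>a'' b''. tj (cp (del k G) E) (subst t k v) T a'' b'' \<and> a'' + occ k t \<le> a + c \<and> b'' \<le> b + d"
  "tjs G t N a b \<Longrightarrow> tjs E v (G k) c d \<Longrightarrow>
    \<exists>a'' b''. tjs (cp (del k G) E) (subst t k v) N a'' b'' \<and> a'' + occ k t * size N \<le> a + c \<and> b'' \<le> b + d"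
proof (induct arbitrary: k v E c d and k v E c d rule: tj_tjs.inducts)
  case (tVar i s G0)
  show ?case
  proof (cases "i = k")
    case True
    have "tjs E v (add_mset s (G0 k)) c d" using tVar.prems True by (simp add: cp_at sing_at)
    then obtain E1 E2 c1 d1 c2 d2 where E: "E = cp E1 E2" "tj E1 v s c1 d1" "tjs E2 v (G0 k) c2 d2"
      "c = c1 + c2" "d = d1 + d2" by (auto simp: tjs_add)
    have "tj (cp E1 (cp (del k (cp (sing i s) G0)) E2)) v s c1 d1" by (rule weak(1)[OF E(2)])
    then have "tj (cp (del k (cp (sing i s) G0)) E) (subst (Var i) k v) s c1 d1"
      using True E(1) by (simp add: cp_lcomm)
    then show ?thesis using E True by (rule_tac exI[of _ c1], rule_tac exI[of _ d1]) auto
  next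
    case False
    let ?j = "if i < k then i else i - 1"
    have "del k (cp (sing i s) G0) = cp (sing ?j s) (del k G0)" using False by (simp add: del_cp del_sing)
    then have "tj (cp (del k (cp (sing i s) G0)) E) (Var ?j) s 1 0"
      using tj_tjs.tVar[of ?j s "cp (del k G0) E"] by (simp add: cp_assoc)
    then show ?thesis using False by (rule_tac exI[of _ 1], rule_tac exI[of _ 0]) auto
  qed
next
  case (tLam M G t T a b)
  have "tjs (ins 0 {#} E) (lift 0 v) (ins 0 M G (Suc k)) c d"
    using tj_lift(2)[OF tLam.prems, of 0] by simp
  from tLam.hyps(2)[OF this] obtain a'' b'' where
    h: "tj (cp (del (Suc k) (ins 0 M G)) (ins 0 {#} E)) (subst t (Suc k) (lift 0 v)) T a'' b''"
      "a'' + occ (Suc k) t \<le> a + c" "b'' \<le> b + d" by blast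
  have "tj (ins 0 M (cp (del k G) E)) (subst t (Suc k) (lift 0 v)) T a'' b''"
    using h(1) ins_cp[of 0 M "{#}" "del k G" E] by (simp add: del_ins0)
  then have "tj (cp (del k G) E) (subst (Lam t) k v) (Arr M T) (Suc a'') b''"
    by (simp add: tj_tjs.tLam)
  then show ?case using h by (rule_tac exI[of _ "Suc a''"], rule_tac exI[of _ b'']) auto
next
  case (tApp G t M T a b D u a' b')
  have "tjs E v (G k + D k) c d" using tApp.prems by (simp add: cp_at)
  from tjs_split[OF this] obtain E1 E2 c1 d1 c2 d2 where E: "E = cp E1 E2" "tjs E1 v (G k) c1 d1"
    "tjs E2 v (D k) c2 d2" "c = c1 + c2" "d = d1 + d2" by blast
  from tApp.hyps(2)[OF E(2)] obtain a1 b1 where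
    h1: "tj (cp (del k G) E1) (subst t k v) (Arr M T) a1 b1" "a1 + occ k t \<le> a + c1" "b1 \<le> b + d1" by blast
  from tApp.hyps(4)[OF E(3)] obtain a2 b2 where
    h2: "tjs (cp (del k D) E2) (subst u k v) M a2 b2" "a2 + occ k u * size M \<le> a' + c2" "b2 \<le> b' + d2" by blast
  have "tj (cp (cp (del k G) E1) (cp (del k D) E2)) (App (subst t k v) (subst u k v)) T (Suc (a1 + a2)) (b1 + b2)"
    using h1(1) h2(1) tApp.hyps(5) by (rule tj_tjs.tApp)
  then have r: "tj (cp (del k (cp G D)) E) (subst (App t u) k v) T (Suc (a1 + a2)) (b1 + b2)"
    using E(1) by (simp add: del_cp cp_assoc cp_comm cp_lcomm)
  have m: "occ k u \<le> occ k u * size M" using tApp.hyps(5) by (rule le_mult_size)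
  have "a2 + occ k u \<le> a' + c2" using m h2(2) by linarith
  then show ?case using r h1 h2(1,3) E by (rule_tac exI[of _ "Suc (a1 + a2)"], rule_tac exI[of _ "b1 + b2"]) auto
next
  case (tApp0 G t T a b D u s a' b')
  have "tjs E v (G k + D k) c d" using tApp0.prems by (simp add: cp_at)
  from tjs_split[OF this] obtain E1 E2 c1 d1 c2 d2 where E: "E = cp E1 E2" "tjs E1 v (G k) c1 d1"
    "tjs E2 v (D k) c2 d2" "c = c1 + c2" "d = d1 + d2" by blast
  from tApp0.hyps(2)[OF E(2)] obtain a1 b1 where
    h1: "tj (cp (del k G) E1) (subst t k v) (Arr {#} T) a1 b1" "a1 + occ k t \<le> a + c1" "b1 \<le> b + d1" by blast
  from tApp0.hyps(4)[OF E(3)] obtain a2 b2 where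
    h2: "tj (cp (del k D) E2) (subst u k v) s a2 b2" "a2 + occ k u \<le> a' + c2" "b2 \<le> b' + d2" by blast
  have "tj (cp (cp (del k G) E1) (cp (del k D) E2)) (App (subst t k v) (subst u k v)) T (Suc (a1 + a2)) (b1 + b2)"
    using h1(1) h2(1) by (rule tj_tjs.tApp0)
  then have r: "tj (cp (del k (cp G D)) E) (subst (App t u) k v) T (Suc (a1 + a2)) (b1 + b2)"
    using E(1) by (simp add: del_cp cp_assoc cp_comm cp_lcomm)
  then show ?case using r h1 h2 E by (rule_tac exI[of _ "Suc (a1 + a2)"], rule_tac exI[of _ "b1 + b2"]) auto
next
  case (tSub M G t T a b D u a' b')
  have "tjs E v (G k + D k) c d" using tSub.prems by (simp add: cp_at)
  from tjs_split[OF this] obtain E1 E2 c1 d1 c2 d2 where E: "E = cp E1 E2" "tjs E1 v (G k) c1 d1"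
    "tjs E2 v (D k) c2 d2" "c = c1 + c2" "d = d1 + d2" by blast
  have "tjs (ins 0 {#} E1) (lift 0 v) (ins 0 M G (Suc k)) c1 d1"
    using tj_lift(2)[OF E(2), of 0] by simp
  from tSub.hyps(2)[OF this] obtain a1 b1 where
    h1: "tj (cp (del (Suc k) (ins 0 M G)) (ins 0 {#} E1)) (subst t (Suc k) (lift 0 v)) T a1 b1"
      "a1 + occ (Suc k) t \<le> a + c1" "b1 \<le> b + d1" by blast
  have h1': "tj (ins 0 M (cp (del k G) E1)) (subst t (Suc k) (lift 0 v)) T a1 b1"
    using h1(1) ins_cp[of 0 M "{#}" "del k G" E1] by (simp add: del_ins0)
  from tSub.hyps(4)[OF E(3)] obtain a2 b2 where
    h2: "tjs (cp (del k D) E2) (subst u k v) M a2 b2" "a2 + occ k u * size M \<le> a' + c2" "b2 \<le> b' + d2" by blast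
  have "tj (cp (cp (del k G) E1) (cp (del k D) E2)) (Sub (subst t (Suc k) (lift 0 v)) (subst u k v)) T
     (a1 + a2) (b1 + b2 + size M * size M)"
    using h1' h2(1) tSub.hyps(5) by (rule tj_tjs.tSub)
  then have r: "tj (cp (del k (cp G D)) E) (subst (Sub t u) k v) T (a1 + a2) (b1 + b2 + size M * size M)"
    using E(1) by (simp add: del_cp cp_assoc cp_comm cp_lcomm)
  have m: "occ k u \<le> occ k u * size M" using tSub.hyps(5) by (rule le_mult_size)
  have "a2 + occ k u \<le> a' + c2" using m h2(2) by linarith
  then show ?case using r h1 h2(1,3) E by (rule_tac exI[of _ "a1 + a2"], rule_tac exI[of _ "b1 + b2 + size M * size M"]) auto
next
  case (tSub0 G t T a b D u s a' b')
  have "tjs E v (G k + D k) c d" using tSub0.prems by (simp add: cp_at)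
  from tjs_split[OF this] obtain E1 E2 c1 d1 c2 d2 where E: "E = cp E1 E2" "tjs E1 v (G k) c1 d1"
    "tjs E2 v (D k) c2 d2" "c = c1 + c2" "d = d1 + d2" by blast
  have "tjs (ins 0 {#} E1) (lift 0 v) (ins 0 {#} G (Suc k)) c1 d1"
    using tj_lift(2)[OF E(2), of 0] by simp
  from tSub0.hyps(2)[OF this] obtain a1 b1 where
    h1: "tj (cp (del (Suc k) (ins 0 {#} G)) (ins 0 {#} E1)) (subst t (Suc k) (lift 0 v)) T a1 b1"
      "a1 + occ (Suc k) t \<le> a + c1" "b1 \<le> b + d1" by blast
  have h1': "tj (ins 0 {#} (cp (del k G) E1)) (subst t (Suc k) (lift 0 v)) T a1 b1"
    using h1(1) ins_cp[of 0 "{#}" "{#}" "del k G" E1] by (simp add: del_ins0)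
  from tSub0.hyps(4)[OF E(3)] obtain a2 b2 where
    h2: "tj (cp (del k D) E2) (subst u k v) s a2 b2" "a2 + occ k u \<le> a' + c2" "b2 \<le> b' + d2" by blast
  have "tj (cp (cp (del k G) E1) (cp (del k D) E2)) (Sub (subst t (Suc k) (lift 0 v)) (subst u k v)) T
     (a1 + a2) (b1 + b2)"
    using h1' h2(1) by (rule tj_tjs.tSub0)
  then have r: "tj (cp (del k (cp G D)) E) (subst (Sub t u) k v) T (a1 + a2) (b1 + b2)"
    using E(1) by (simp add: del_cp cp_assoc cp_comm cp_lcomm)
  then show ?case using r h1 h2 E by (rule_tac exI[of _ "a1 + a2"], rule_tac exI[of _ "b1 + b2"]) auto
next
  case (sNil t)
  then have "E = e0" "c = 0" "d = 0" by (auto simp: tjs_empty e0_at)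
  then show ?case using tj_tjs.sNil[of "subst t k v"] by auto
next
  case (sAdd D1 t s a1 b1 D2 M a2 b2)
  have "tjs E v (D1 k + D2 k) c d" using sAdd.prems by (simp add: cp_at)
  from tjs_split[OF this] obtain E1 E2 c1 d1 c2 d2 where E: "E = cp E1 E2" "tjs E1 v (D1 k) c1 d1"
    "tjs E2 v (D2 k) c2 d2" "c = c1 + c2" "d = d1 + d2" by blast
  from sAdd.hyps(2)[OF E(2)] obtain x1 y1 where
    h1: "tj (cp (del k D1) E1) (subst t k v) s x1 y1" "x1 + occ k t \<le> a1 + c1" "y1 \<le> b1 + d1" by blast
  from sAdd.hyps(4)[OF E(3)] obtain x2 y2 where
    h2: "tjs (cp (del k D2) E2) (subst t k v) M x2 y2" "x2 + occ k t * size M \<le> a2 + c2" "y2 \<le> b2 + d2" by blast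
  have "tjs (cp (cp (del k D1) E1) (cp (del k D2) E2)) (subst t k v) (add_mset s M) (x1 + x2) (y1 + y2)"
    using h1(1) h2(1) by (rule tj_tjs.sAdd)
  then have r: "tjs (cp (del k (cp D1 D2)) E) (subst t k v) (add_mset s M) (x1 + x2) (y1 + y2)"
    using E(1) by (simp add: del_cp cp_assoc cp_comm cp_lcomm)
  then show ?case using r h1 h2 E by (rule_tac exI[of _ "x1 + x2"], rule_tac exI[of _ "y1 + y2"]) (auto simp: algebra_simps)
qed


definition ltx :: "nat \<Rightarrow> nat \<Rightarrow> nat \<Rightarrow> nat \<Rightarrow> bool" where
  "ltx a' b' a b \<longleftrightarrow> a' < a \<or> (a' = a \<and> b' < b)"

lemma tjm_lift: "tjm D u M a b \<Longrightarrow> tjm (ins k {#} D) (lift k u) M a b"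
  by (auto simp: tjm_def split: if_splits intro: tj_lift)

lemma tjm_unlift: "tjm D (lift k u) M a b \<Longrightarrow> tjm (del k D) u M a b"
  by (auto simp: tjm_def split: if_splits intro: tj_unlift(1)[OF _ refl] tj_unlift(2)[OF _ refl])

lemma tjm_pos: "tjm D u M a b \<Longrightarrow> 1 \<le> a"
proof -
  assume h: "tjm D u M a b"
  show ?thesis
  proof (cases "M = {#}")
    case True then show ?thesis using h tj_pos(1) by (auto simp: tjm_def)
  next
    case False
    then have "1 \<le> size M" by (cases M) auto
    then show ?thesis using h False tj_pos(2)[of D u M a b] by (auto simp: tjm_def)
  qed
qed

lemma tjm_ne: "M \<noteq> {#} \<Longrightarrow> tjm D u M a b \<longleftrightarrow> tjs D u M a b"
  by (simp add: tjm_def)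

lemma tjm_shrink: "tjm D u (A + B) a b \<Longrightarrow> \<exists>D' a' b'. tjm D' u A a' b' \<and> (\<forall>i. D' i \<subseteq># D i) \<and> a' \<le> a \<and> b' \<le> b"
proof -
  assume h: "tjm D u (A + B) a b"
  show ?thesis
  proof (cases "A + B = {#}")
    case True
    then show ?thesis using h by (rule_tac exI[of _ D], rule_tac exI[of _ a], rule_tac exI[of _ b]) (auto simp: tjm_def)
  next
    case False
    then have s: "tjs D u (A + B) a b" using h by (simp add: tjm_def)
    from tjs_split[OF s] obtain D1 D2 a1 b1 a2 b2 where d: "D = cp D1 D2" "tjs D1 u A a1 b1"
      "tjs D2 u B a2 b2" "a = a1 + a2" "b = b1 + b2" by blast
    show ?thesis
    proof (cases "A = {#}")
      case False
      then show ?thesis using d by (rule_tac exI[of _ D1], rule_tac exI[of _ a1], rule_tac exI[of _ b1])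
        (auto simp: tjm_def cp_at)
    next
      case True
      then have "B \<noteq> {#}" using \<open>A + B \<noteq> {#}\<close> by simp
      then obtain x where "x \<in># B" by (meson multiset_nonemptyE)
      from tjs_pick[OF d(3) this] obtain E1 E2 c1 d1 c2 d2 where e: "D2 = cp E1 E2" "tj E1 u x c1 d1"
        "a2 = c1 + c2" "b2 = d1 + d2" by blast
      have "\<forall>i. E1 i \<subseteq># D i" using d(1) e(1) by (simp add: cp_at)
      then show ?thesis using True e d by (rule_tac exI[of _ E1], rule_tac exI[of _ c1], rule_tac exI[of _ d1])
        (auto simp: tjm_def)
    qed
  qed
qed

lemma subs_snoc': "subs h (L @ [v]) = Sub (subs h L) v"
  by (rule subs_snoc)

lemma tj_dB: "tj G (subs (Lam t) L) (Arr M T) a b \<Longrightarrow> tjm D u M a2 b2 \<Longrightarrow>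
   \<exists>a1. a = Suc a1 \<and> tj (cp G D) (subs (Sub t ((lift 0 ^^ length L) u)) L) T (a1 + a2) (b + b2 + size M * size M)"
proof (induct L arbitrary: G a b D u rule: rev_induct)
  case Nil
  from Nil.prems(1) obtain a1 where a: "a = Suc a1" "tj (ins 0 M G) t T a1 b" by (auto simp: tj_Lam)
  have "tj (cp G D) (Sub t u) T (a1 + a2) (b + b2 + size M * size M)"
    using a(2) Nil.prems(2) by (subst tj_Sub) blast
  then show ?case using a by simp
next
  case (snoc v L)
  from snoc.prems(1) obtain N G1 Dv a1 b1 a3 b3 where h: "G = cp G1 Dv"
    "tj (ins 0 N G1) (subs (Lam t) L) (Arr M T) a1 b1" "tjm Dv v N a3 b3" "a = a1 + a3" "b = b1 + b3 + size N * size N"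
    by (auto simp: subs_snoc tj_Sub)
  from snoc.hyps[OF h(2) tjm_lift[OF snoc.prems(2), of 0]] obtain a1' where
    i: "a1 = Suc a1'" "tj (cp (ins 0 N G1) (ins 0 {#} D)) (subs (Sub t ((lift 0 ^^ length L) (lift 0 u))) L) T (a1' + a2)
        (b1 + b2 + size M * size M)" by blast
  have e: "(lift 0 ^^ length L) (lift 0 u) = (lift 0 ^^ length (L @ [v])) u"
    by (simp only: length_append_singleton funpow_Suc_right comp_def)
  have "tj (ins 0 N (cp G1 D)) (subs (Sub t ((lift 0 ^^ length (L @ [v])) u)) L) T (a1' + a2)
        (b1 + b2 + size M * size M)" using i(2) ins_cp[of 0 N "{#}" G1 D] e by simp
  then have "tj (cp (cp G1 D) Dv) (Sub (subs (Sub t ((lift 0 ^^ length (L @ [v])) u)) L) v) T (a1' + a2 + a3)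
        (b1 + b2 + size M * size M + b3 + size N * size N)"
    using h(3) by (subst tj_Sub) blast
  then show ?case using h i by (simp add: subs_snoc cp_assoc cp_comm cp_lcomm algebra_simps)
qed


lemma ins01_upd: "(ins 0 M (ins 0 {#} G))(0 := M1, 1 := M2) = ins 0 M1 (ins 0 M2 G)"
  by (rule ext) (auto simp: cx_app)

lemma root_sr: "lj_root t t' \<Longrightarrow> tj G t T a b \<Longrightarrow> \<exists>a' b'. tj G t' T a' b' \<and> ltx a' b' a b"
proof (induct rule: lj_root.induct)
  case (dB t0 L u)
  from dB obtain M G1 D a1 b1 a2 b2 where h: "G = cp G1 D" "tj G1 (subs (Lam t0) L) (Arr M T) a1 b1"
    "tjm D u M a2 b2" "a = Suc (a1 + a2)" "b = b1 + b2" by (auto simp: tj_App)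
  from tj_dB[OF h(2,3)] obtain a1' where "a1 = Suc a1'"
    "tj (cp G1 D) (subs (Sub t0 ((lift 0 ^^ length L) u)) L) T (a1' + a2) (b1 + b2 + size M * size M)" by blast
  then show ?case using h by (rule_tac exI[of _ "a1' + a2"], rule_tac exI[of _ "b1 + b2 + size M * size M"])
    (auto simp: ltx_def)
next
  case (w t0 u)
  from w.prems obtain M G1 D a1 b1 a2 b2 where h: "G = cp G1 D" "tj (ins 0 M G1) t0 T a1 b1"
    "tjm D u M a2 b2" "a = a1 + a2" "b = b1 + b2 + size M * size M" by (auto simp: tj_Sub)
  have "tj (del 0 (ins 0 M G1)) (subst t0 0 u) T a1 b1" using tj_erase(1)[OF h(2) w.hyps] .
  then have "tj G (subst t0 0 u) T a1 b1" using h(1) weak(1) by simp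
  moreover have "1 \<le> a2" using tjm_pos[OF h(3)] .
  ultimately show ?case using h by (rule_tac exI[of _ a1], rule_tac exI[of _ b1]) (auto simp: ltx_def)
next
  case (d t0 u)
  from d.prems obtain M G1 D a1 b1 a2 b2 where h: "G = cp G1 D" "tj (ins 0 M G1) t0 T a1 b1"
    "tjm D u M a2 b2" "a = a1 + a2" "b = b1 + b2 + size M * size M" by (auto simp: tj_Sub)
  have "occ 0 t0 \<le> size M" using tj_occ(1)[OF h(2), of 0] by simp
  then have "M \<noteq> {#}" using d.hyps by auto
  then have s: "tjs D u (ins 0 M G1 0) a2 b2" using h(3) by (simp add: tjm_def)
  from tj_subst(1)[OF h(2) s] obtain a'' b'' where
    r: "tj (cp (del 0 (ins 0 M G1)) D) (subst t0 0 u) T a'' b''" "a'' + occ 0 t0 \<le> a1 + a2" "b'' \<le> b1 + b2"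
    by blast
  then show ?case using h d.hyps by (rule_tac exI[of _ a''], rule_tac exI[of _ b'']) (auto simp: ltx_def)
next
  case (c t0 s u)
  from c.prems obtain M G1 D a1 b1 a2 b2 where h: "G = cp G1 D" "tj (ins 0 M G1) t0 T a1 b1"
    "tjm D u M a2 b2" "a = a1 + a2" "b = b1 + b2 + size M * size M" by (auto simp: tj_Sub)
  have "occ 0 t0 \<le> size M" using tj_occ(1)[OF h(2), of 0] by simp
  then have "M \<noteq> {#}" using c.hyps(1) by auto
  then have ts: "tjs D u M a2 b2" using h(3) by (simp add: tjm_def)
  have "tj (ins 1 {#} (ins 0 M G1)) (lift 1 t0) T a1 b1" by (rule tj_lift(1)[OF h(2)])
  then have l: "tj (ins 0 M (ins 0 {#} G1)) (lift 1 t0) T a1 b1" using ins_ins0[of 0 "{#}" M G1] by simp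
  have z: "ins 0 M (ins 0 {#} G1) 1 = {#}" by (simp add: cx_app)
  from tj_ren(1)[OF l c.hyps(2) z] obtain M1 M2 where
    r: "ins 0 M (ins 0 {#} G1) 0 = M1 + M2" "tj ((ins 0 M (ins 0 {#} G1))(0 := M1, 1 := M2)) s T a1 b1"
    by auto
  have r2: "tj (ins 0 M1 (ins 0 M2 G1)) s T a1 b1" using r(2) by (simp only: ins01_upd)
  have m: "M = M1 + M2" using r(1) by simp
  have "occ 0 s \<le> size M1" using tj_occ(1)[OF r2, of 0] by simp
  then have n1: "M1 \<noteq> {#}" using c.hyps(3) by auto
  have "occ 1 s \<le> size M2" using tj_occ(1)[OF r2, of 1] by simp
  then have n2: "M2 \<noteq> {#}" using c.hyps(4) by auto
  from tjs_split[OF ts[unfolded m]] obtain D1 D2 c1 d1 c2 d2 where e: "D = cp D1 D2"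
    "tjs D1 u M1 c1 d1" "tjs D2 u M2 c2 d2" "a2 = c1 + c2" "b2 = d1 + d2" by blast
  have "tj (cp (ins 0 M2 G1) (ins 0 {#} D1)) (Sub s (lift 0 u)) T (a1 + c1) (b1 + d1 + size M1 * size M1)"
    using r2 tj_lift(2)[OF e(2), of 0] n1 by (rule tj_tjs.tSub)
  then have "tj (ins 0 M2 (cp G1 D1)) (Sub s (lift 0 u)) T (a1 + c1) (b1 + d1 + size M1 * size M1)"
    using ins_cp[of 0 M2 "{#}" G1 D1] by simp
  then have "tj (cp (cp G1 D1) D2) (Sub (Sub s (lift 0 u)) u) T (a1 + c1 + c2)
     (b1 + d1 + size M1 * size M1 + d2 + size M2 * size M2)"
    using e(3) n2 by (rule tj_tjs.tSub)
  then have fin: "tj G (Sub (Sub s (lift 0 u)) u) T a (b1 + d1 + size M1 * size M1 + d2 + size M2 * size M2)"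
    using h e by (simp add: cp_assoc add.assoc)
  have "size M1 * size M1 + size M2 * size M2 < size M * size M"
    using n1 n2 m by (cases M1; cases M2) (auto simp: algebra_simps)
  then show ?case using fin h e by (rule_tac exI[of _ a], rule_tac exI[of _ "b1 + d1 + size M1 * size M1 + d2 + size M2 * size M2"])
    (auto simp: ltx_def)
qed


lemma tSubm: "tj (ins 0 M G) t T a b \<Longrightarrow> tjm D u M a' b' \<Longrightarrow>
   tj (cp G D) (Sub t u) T (a + a') (b + b' + size M * size M)"
  by (subst tj_Sub) blast

lemma tAppm: "tj G t (Arr M T) a b \<Longrightarrow> tjm D u M a' b' \<Longrightarrow>
   tj (cp G D) (App t u) T (Suc (a + a')) (b + b')"
  by (subst tj_App) blast

lemma swc0_ins: "swc 0 (ins 0 A (ins 0 B G)) = ins 0 B (ins 0 A G)"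
  by (rule ext) (auto simp: cx_app)

lemma sw_sw [simp]: "sw k (sw k t) = t"
  by (induct t arbitrary: k) auto

lemma ins_del0: "ins 0 (G 0) (del 0 G) = G"
  by (rule ins_del)

lemma sq_mono: "size A \<le> size B \<Longrightarrow> size A * size A \<le> size B * size B"
  by (simp add: mult_le_mono)


lemma CS_le: "tj G (Sub (Sub t0 (lift 0 s)) v) T a b \<Longrightarrow>
  \<exists>a' b'. tj G (Sub (Sub (sw 0 t0) (lift 0 v)) s) T a' b' \<and> a' \<le> a \<and> b' \<le> b"
proof -
  assume a0: "tj G (Sub (Sub t0 (lift 0 s)) v) T a b"
  obtain My G1 Dv a1 b1 a2 b2 where h: "G = cp G1 Dv" "tj (ins 0 My G1) (Sub t0 (lift 0 s)) T a1 b1"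
    "tjm Dv v My a2 b2" "a = a1 + a2" "b = b1 + b2 + size My * size My" using tj_Sub[THEN iffD1, OF a0] by blast
  obtain Mx G2 Ds' a3 b3 a4 b4 where i: "ins 0 My G1 = cp G2 Ds'" "tj (ins 0 Mx G2) t0 T a3 b3"
    "tjm Ds' (lift 0 s) Mx a4 b4" "a1 = a3 + a4" "b1 = b3 + b4 + size Mx * size Mx" using tj_Sub[THEN iffD1, OF h(2)] by blast
  have ts: "tjm (del 0 Ds') s Mx a4 b4" by (rule tjm_unlift[OF i(3)])
  have G1: "G1 = cp (del 0 G2) (del 0 Ds')" using arg_cong[OF i(1), of "del 0"] by (simp add: del_cp)
  have My: "My = G2 0 + Ds' 0" using fun_cong[OF i(1), of 0] by (simp add: cp_at)
  have "tj (ins 0 Mx (ins 0 (G2 0) (del 0 G2))) t0 T a3 b3" using i(2) by (simp add: ins_del0)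
  from tj_sw(1)[OF this, of 0] have t1: "tj (ins 0 (G2 0) (ins 0 Mx (del 0 G2))) (sw 0 t0) T a3 b3"
    by (simp add: swc0_ins)
  from tjm_shrink[OF h(3)[unfolded My]] obtain Dv' a2' b2' where
    sh: "tjm Dv' v (G2 0) a2' b2'" "\<forall>i. Dv' i \<subseteq># Dv i" "a2' \<le> a2" "b2' \<le> b2" by blast
  have "tj (cp (ins 0 Mx (del 0 G2)) (ins 0 {#} Dv')) (Sub (sw 0 t0) (lift 0 v)) T (a3 + a2')
      (b3 + b2' + size (G2 0) * size (G2 0))"
    using t1 tjm_lift[OF sh(1), of 0] by (rule tSubm)
  then have "tj (ins 0 Mx (cp (del 0 G2) Dv')) (Sub (sw 0 t0) (lift 0 v)) T (a3 + a2')
      (b3 + b2' + size (G2 0) * size (G2 0))" using ins_cp[of 0 Mx "{#}" "del 0 G2" Dv'] by simp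
  from tSubm[OF this ts] have r: "tj (cp (cp (del 0 G2) Dv') (del 0 Ds')) (Sub (Sub (sw 0 t0) (lift 0 v)) s) T
      (a3 + a2' + a4) (b3 + b2' + size (G2 0) * size (G2 0) + b4 + size Mx * size Mx)" .
  have le: "\<And>i. cp (cp (del 0 G2) Dv') (del 0 Ds') i \<subseteq># G i"
  proof -
    fix i
    have "cp (cp (del 0 G2) Dv') (del 0 Ds') i = (del 0 G2 i + del 0 Ds' i) + Dv' i" by (simp add: cp_at ac_simps)
    moreover have "G i = (del 0 G2 i + del 0 Ds' i) + Dv i" using h(1) G1 by (simp add: cp_at)
    ultimately show "cp (cp (del 0 G2) Dv') (del 0 Ds') i \<subseteq># G i"
      using sh(2) by (simp add: subset_mset.add_left_mono)
  qed
  have "size (G2 0) * size (G2 0) \<le> size My * size My" using My by (intro sq_mono) simp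
  then show ?thesis using weak_le[OF r le] h i sh
    by (rule_tac exI[of _ "a3 + a2' + a4"], rule_tac exI[of _ "b3 + b2' + size (G2 0) * size (G2 0) + b4 + size Mx * size Mx"]) auto
qed


lemma oLam_le: "tj G (Lam (Sub t0 (lift 0 s))) T a b \<Longrightarrow>
  \<exists>a' b'. tj G (Sub (Lam (sw 0 t0)) s) T a' b' \<and> a' \<le> a \<and> b' \<le> b"
proof -
  assume a0: "tj G (Lam (Sub t0 (lift 0 s))) T a b"
  obtain M T' a1 where h: "T = Arr M T'" "a = Suc a1" "tj (ins 0 M G) (Sub t0 (lift 0 s)) T' a1 b"
    using tj_Lam[THEN iffD1, OF a0] by blast
  obtain Mx G2 Ds' a3 b3 a4 b4 where i: "ins 0 M G = cp G2 Ds'" "tj (ins 0 Mx G2) t0 T' a3 b3"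
    "tjm Ds' (lift 0 s) Mx a4 b4" "a1 = a3 + a4" "b = b3 + b4 + size Mx * size Mx"
    using tj_Sub[THEN iffD1, OF h(3)] by blast
  have ts: "tjm (del 0 Ds') s Mx a4 b4" by (rule tjm_unlift[OF i(3)])
  have G: "G = cp (del 0 G2) (del 0 Ds')" using arg_cong[OF i(1), of "del 0"] by (simp add: del_cp)
  have M: "M = G2 0 + Ds' 0" using fun_cong[OF i(1), of 0] by (simp add: cp_at)
  have "tj (ins 0 Mx (ins 0 (G2 0) (del 0 G2))) t0 T' a3 b3" using i(2) by (simp add: ins_del0)
  from tj_sw(1)[OF this, of 0] have t1: "tj (ins 0 (G2 0) (ins 0 Mx (del 0 G2))) (sw 0 t0) T' a3 b3"
    by (simp add: swc0_ins)
  have "\<And>i. ins 0 (G2 0) (ins 0 Mx (del 0 G2)) i \<subseteq># ins 0 M (ins 0 Mx (del 0 G2)) i"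
    using M by (simp add: cx_app)
  from weak_le[OF t1 this] have "tj (ins 0 Mx (del 0 G2)) (Lam (sw 0 t0)) (Arr M T') (Suc a3) b3"
    by (rule tj_tjs.tLam)
  from tSubm[OF this ts] have "tj G (Sub (Lam (sw 0 t0)) s) T (Suc a3 + a4) (b3 + b4 + size Mx * size Mx)"
    using G h(1) by simp
  then show ?thesis using h i by (rule_tac exI[of _ "Suc a3 + a4"], rule_tac exI[of _ "b3 + b4 + size Mx * size Mx"]) auto
qed

lemma oLam_le2: "tj G (Sub (Lam (sw 0 t0)) s) T a b \<Longrightarrow>
  \<exists>a' b'. tj G (Lam (Sub t0 (lift 0 s))) T a' b' \<and> a' \<le> a \<and> b' \<le> b"
proof -
  assume a0: "tj G (Sub (Lam (sw 0 t0)) s) T a b"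
  obtain Mx G1 Ds a1 b1 a2 b2 where h: "G = cp G1 Ds" "tj (ins 0 Mx G1) (Lam (sw 0 t0)) T a1 b1"
    "tjm Ds s Mx a2 b2" "a = a1 + a2" "b = b1 + b2 + size Mx * size Mx"
    using tj_Sub[THEN iffD1, OF a0] by blast
  obtain M T' a3 where i: "T = Arr M T'" "a1 = Suc a3" "tj (ins 0 M (ins 0 Mx G1)) (sw 0 t0) T' a3 b1"
    using tj_Lam[THEN iffD1, OF h(2)] by blast
  from tj_sw(1)[OF i(3), of 0] have t1: "tj (ins 0 Mx (ins 0 M G1)) t0 T' a3 b1"
    by (simp add: swc0_ins)
  have "tj (cp (ins 0 M G1) (ins 0 {#} Ds)) (Sub t0 (lift 0 s)) T' (a3 + a2) (b1 + b2 + size Mx * size Mx)"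
    using t1 tjm_lift[OF h(3), of 0] by (rule tSubm)
  then have "tj (ins 0 M (cp G1 Ds)) (Sub t0 (lift 0 s)) T' (a3 + a2) (b1 + b2 + size Mx * size Mx)"
    using ins_cp[of 0 M "{#}" G1 Ds] by simp
  then have "tj G (Lam (Sub t0 (lift 0 s))) T (Suc (a3 + a2)) (b1 + b2 + size Mx * size Mx)"
    using h(1) i(1) by (simp add: tj_tjs.tLam)
  then show ?thesis using h i by (rule_tac exI[of _ "Suc (a3 + a2)"], rule_tac exI[of _ "b1 + b2 + size Mx * size Mx"]) auto
qed

lemma oApp_le: "tj G (App (Sub t0 s) v) T a b \<Longrightarrow>
  \<exists>a' b'. tj G (Sub (App t0 (lift 0 v)) s) T a' b' \<and> a' \<le> a \<and> b' \<le> b"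
proof -
  assume a0: "tj G (App (Sub t0 s) v) T a b"
  obtain M G1 Dv a1 b1 a2 b2 where h: "G = cp G1 Dv" "tj G1 (Sub t0 s) (Arr M T) a1 b1"
    "tjm Dv v M a2 b2" "a = Suc (a1 + a2)" "b = b1 + b2"
    using tj_App[THEN iffD1, OF a0] by blast
  obtain Mx G2 Ds a3 b3 a4 b4 where i: "G1 = cp G2 Ds" "tj (ins 0 Mx G2) t0 (Arr M T) a3 b3"
    "tjm Ds s Mx a4 b4" "a1 = a3 + a4" "b1 = b3 + b4 + size Mx * size Mx"
    using tj_Sub[THEN iffD1, OF h(2)] by blast
  have "tj (cp (ins 0 Mx G2) (ins 0 {#} Dv)) (App t0 (lift 0 v)) T (Suc (a3 + a2)) (b3 + b2)"
    using i(2) tjm_lift[OF h(3), of 0] by (rule tAppm)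
  then have "tj (ins 0 Mx (cp G2 Dv)) (App t0 (lift 0 v)) T (Suc (a3 + a2)) (b3 + b2)"
    using ins_cp[of 0 Mx "{#}" G2 Dv] by simp
  from tSubm[OF this i(3)] have "tj G (Sub (App t0 (lift 0 v)) s) T (Suc (a3 + a2) + a4) (b3 + b2 + b4 + size Mx * size Mx)"
    using h(1) i(1) by (simp add: cp_assoc cp_comm cp_lcomm)
  then show ?thesis using h i by (rule_tac exI[of _ "Suc (a3 + a2) + a4"], rule_tac exI[of _ "b3 + b2 + b4 + size Mx * size Mx"]) auto
qed

lemma oApp_le2: "tj G (Sub (App t0 (lift 0 v)) s) T a b \<Longrightarrow>
  \<exists>a' b'. tj G (App (Sub t0 s) v) T a' b' \<and> a' \<le> a \<and> b' \<le> b"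
proof -
  assume a0: "tj G (Sub (App t0 (lift 0 v)) s) T a b"
  obtain Mx G1 Ds a1 b1 a2 b2 where h: "G = cp G1 Ds" "tj (ins 0 Mx G1) (App t0 (lift 0 v)) T a1 b1"
    "tjm Ds s Mx a2 b2" "a = a1 + a2" "b = b1 + b2 + size Mx * size Mx"
    using tj_Sub[THEN iffD1, OF a0] by blast
  obtain M Ga Gb a3 b3 a4 b4 where i: "ins 0 Mx G1 = cp Ga Gb" "tj Ga t0 (Arr M T) a3 b3"
    "tjm Gb (lift 0 v) M a4 b4" "a1 = Suc (a3 + a4)" "b1 = b3 + b4"
    using tj_App[THEN iffD1, OF h(2)] by blast
  have tv: "tjm (del 0 Gb) v M a4 b4" by (rule tjm_unlift[OF i(3)])
  have G1: "G1 = cp (del 0 Ga) (del 0 Gb)" using arg_cong[OF i(1), of "del 0"] by (simp add: del_cp)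
  have Mx: "Mx = Ga 0 + Gb 0" using fun_cong[OF i(1), of 0] by (simp add: cp_at)
  from tjm_shrink[OF h(3)[unfolded Mx]] obtain Ds' a2' b2' where
    sh: "tjm Ds' s (Ga 0) a2' b2'" "\<forall>i. Ds' i \<subseteq># Ds i" "a2' \<le> a2" "b2' \<le> b2" by blast
  have "tj (ins 0 (Ga 0) (del 0 Ga)) t0 (Arr M T) a3 b3" using i(2) by (simp add: ins_del0)
  from tSubm[OF this sh(1)] have "tj (cp (del 0 Ga) Ds') (Sub t0 s) (Arr M T) (a3 + a2') (b3 + b2' + size (Ga 0) * size (Ga 0))" .
  from tAppm[OF this tv] have r: "tj (cp (cp (del 0 Ga) Ds') (del 0 Gb)) (App (Sub t0 s) v) T
     (Suc (a3 + a2' + a4)) (b3 + b2' + size (Ga 0) * size (Ga 0) + b4)" .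
  have le: "\<And>i. cp (cp (del 0 Ga) Ds') (del 0 Gb) i \<subseteq># G i"
  proof -
    fix i
    have "cp (cp (del 0 Ga) Ds') (del 0 Gb) i = (del 0 Ga i + del 0 Gb i) + Ds' i" by (simp add: cp_at ac_simps)
    moreover have "G i = (del 0 Ga i + del 0 Gb i) + Ds i" using h(1) G1 by (simp add: cp_at)
    ultimately show "cp (cp (del 0 Ga) Ds') (del 0 Gb) i \<subseteq># G i"
      using sh(2) by (simp add: subset_mset.add_left_mono)
  qed
  have "size (Ga 0) * size (Ga 0) \<le> size Mx * size Mx" using Mx by (intro sq_mono) simp
  then show ?thesis using weak_le[OF r le] h i sh
    by (rule_tac exI[of _ "Suc (a3 + a2' + a4)"], rule_tac exI[of _ "b3 + b2' + size (Ga 0) * size (Ga 0) + b4"]) auto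
qed


lemma ltx_add: "ltx a1' b1' a1 b1 \<Longrightarrow> ltx a2' b2' a2 b2 \<Longrightarrow> ltx (a1' + a2') (b1' + b2') (a1 + a2) (b1 + b2)"
  by (auto simp: ltx_def)

lemma tjs_step:
  assumes H: "\<And>G T a b. tj G t T a b \<Longrightarrow> \<exists>a' b'. tj G t' T a' b' \<and> R a' b' a b"
    and Ra: "\<And>x1 y1 x2 y2 u1 v1 u2 v2. R x1 y1 u1 v1 \<Longrightarrow> R x2 y2 u2 v2 \<Longrightarrow> R (x1 + x2) (y1 + y2) (u1 + u2) (v1 + v2)"
  shows "tjs D t M a b \<Longrightarrow> M \<noteq> {#} \<Longrightarrow> \<exists>a' b'. tjs D t' M a' b' \<and> R a' b' a b"
proof (induct M arbitrary: D a b)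
  case empty then show ?case by simp
next
  case (add s M)
  from add.prems(1) obtain D1 D2 a1 b1 a2 b2 where d: "D = cp D1 D2" "tj D1 t s a1 b1" "tjs D2 t M a2 b2"
    "a = a1 + a2" "b = b1 + b2" by (auto simp: tjs_add)
  from H[OF d(2)] obtain a1' b1' where h1: "tj D1 t' s a1' b1'" "R a1' b1' a1 b1" by blast
  show ?case
  proof (cases "M = {#}")
    case True
    then have "D2 = e0" "a2 = 0" "b2 = 0" using d(3) by (auto simp: tjs_empty)
    then have "tjs D t' (add_mset s M) a1' b1'" using d h1 True tj_tjs.sAdd[OF h1(1) tj_tjs.sNil] by simp
    then show ?thesis using h1 d \<open>a2 = 0\<close> \<open>b2 = 0\<close> by auto
  next
    case False
    from add.hyps[OF d(3) False] obtain a2' b2' where h2: "tjs D2 t' M a2' b2'" "R a2' b2' a2 b2" by blast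
    have "tjs D t' (add_mset s M) (a1' + a2') (b1' + b2')" using d(1) tj_tjs.sAdd[OF h1(1) h2(1)] by simp
    then show ?thesis using Ra[OF h1(2) h2(2)] d by blast
  qed
qed

lemma tjm_step:
  assumes H: "\<And>G T a b. tj G t T a b \<Longrightarrow> \<exists>a' b'. tj G t' T a' b' \<and> R a' b' a b"
    and Ra: "\<And>x1 y1 x2 y2 u1 v1 u2 v2. R x1 y1 u1 v1 \<Longrightarrow> R x2 y2 u2 v2 \<Longrightarrow> R (x1 + x2) (y1 + y2) (u1 + u2) (v1 + v2)"
  shows "tjm D t M a b \<Longrightarrow> \<exists>a' b'. tjm D t' M a' b' \<and> R a' b' a b"
proof -
  assume h: "tjm D t M a b"
  show ?thesis
  proof (cases "M = {#}")
    case True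
    then obtain s where "tj D t s a b" using h by (auto simp: tjm_def)
    from H[OF this] show ?thesis using True by (auto simp: tjm_def)
  next
    case False
    then have "tjs D t M a b" using h by (simp add: tjm_def)
    from tjs_step[of t t' R, OF H Ra this False] show ?thesis using False by (simp add: tjm_def)
  qed
qed

lemma ctx_sr: "ctx lj_root t t' \<Longrightarrow> \<forall>G T a b. tj G t T a b \<longrightarrow> (\<exists>a' b'. tj G t' T a' b' \<and> ltx a' b' a b)"
proof (induct rule: ctx.induct)
  case (ctx_root t u) then show ?case using root_sr by blast
next
  case (ctx_Lam t u)
  show ?case
  proof (intro allI impI)
    fix G S a b assume "tj G (Lam t) S a b"
    then obtain M T a1 where h: "S = Arr M T" "a = Suc a1" "tj (ins 0 M G) t T a1 b" by (auto simp: tj_Lam)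
    from ctx_Lam.hyps(2) h(3) obtain a' b' where "tj (ins 0 M G) u T a' b'" "ltx a' b' a1 b" by blast
    then show "\<exists>a' b'. tj G (Lam u) S a' b' \<and> ltx a' b' a b" using h
      by (rule_tac exI[of _ "Suc a'"], rule_tac exI[of _ b']) (auto simp: ltx_def intro: tj_tjs.tLam)
  qed
next
  case (ctx_AppL t u s)
  show ?case
  proof (intro allI impI)
    fix G T a b assume a0: "tj G (App t s) T a b"
    obtain M G1 D a1 b1 a2 b2 where h: "G = cp G1 D" "tj G1 t (Arr M T) a1 b1" "tjm D s M a2 b2"
      "a = Suc (a1 + a2)" "b = b1 + b2" using tj_App[THEN iffD1, OF a0] by blast
    from ctx_AppL.hyps(2) h(2) obtain a' b' where "tj G1 u (Arr M T) a' b'" "ltx a' b' a1 b1" by blast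
    then show "\<exists>a' b'. tj G (App u s) T a' b' \<and> ltx a' b' a b" using h tAppm
      by (rule_tac exI[of _ "Suc (a' + a2)"], rule_tac exI[of _ "b' + b2"]) (auto simp: ltx_def)
  qed
next
  case (ctx_AppR t u s)
  show ?case
  proof (intro allI impI)
    fix G T a b assume a0: "tj G (App s t) T a b"
    obtain M G1 D a1 b1 a2 b2 where h: "G = cp G1 D" "tj G1 s (Arr M T) a1 b1" "tjm D t M a2 b2"
      "a = Suc (a1 + a2)" "b = b1 + b2" using tj_App[THEN iffD1, OF a0] by blast
    from tjm_step[of t u ltx, OF _ ltx_add h(3)] ctx_AppR.hyps(2) obtain a' b' where
      "tjm D u M a' b'" "ltx a' b' a2 b2" by blast
    then show "\<exists>a' b'. tj G (App s u) T a' b' \<and> ltx a' b' a b" using h tAppm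
      by (rule_tac exI[of _ "Suc (a1 + a')"], rule_tac exI[of _ "b1 + b'"]) (auto simp: ltx_def)
  qed
next
  case (ctx_SubL t u s)
  show ?case
  proof (intro allI impI)
    fix G T a b assume a0: "tj G (Sub t s) T a b"
    obtain M G1 D a1 b1 a2 b2 where h: "G = cp G1 D" "tj (ins 0 M G1) t T a1 b1" "tjm D s M a2 b2"
      "a = a1 + a2" "b = b1 + b2 + size M * size M" using tj_Sub[THEN iffD1, OF a0] by blast
    from ctx_SubL.hyps(2) h(2) obtain a' b' where "tj (ins 0 M G1) u T a' b'" "ltx a' b' a1 b1" by blast
    then show "\<exists>a' b'. tj G (Sub u s) T a' b' \<and> ltx a' b' a b" using h tSubm
      by (rule_tac exI[of _ "a' + a2"], rule_tac exI[of _ "b' + b2 + size M * size M"]) (auto simp: ltx_def)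
  qed
next
  case (ctx_SubR t u s)
  show ?case
  proof (intro allI impI)
    fix G T a b assume a0: "tj G (Sub s t) T a b"
    obtain M G1 D a1 b1 a2 b2 where h: "G = cp G1 D" "tj (ins 0 M G1) s T a1 b1" "tjm D t M a2 b2"
      "a = a1 + a2" "b = b1 + b2 + size M * size M" using tj_Sub[THEN iffD1, OF a0] by blast
    from tjm_step[of t u ltx, OF _ ltx_add h(3)] ctx_SubR.hyps(2) obtain a' b' where
      "tjm D u M a' b'" "ltx a' b' a2 b2" by blast
    then show "\<exists>a' b'. tj G (Sub s u) T a' b' \<and> ltx a' b' a b" using h tSubm
      by (rule_tac exI[of _ "a1 + a'"], rule_tac exI[of _ "b1 + b' + size M * size M"]) (auto simp: ltx_def)
  qed
qed


definition oo :: "trm \<Rightarrow> trm \<Rightarrow> bool" where "oo x y \<longleftrightarrow> o_ax x y \<or> o_ax y x"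

definition le2 :: "nat \<Rightarrow> nat \<Rightarrow> nat \<Rightarrow> nat \<Rightarrow> bool" where "le2 a' b' a b \<longleftrightarrow> a' \<le> a \<and> b' \<le> b"

lemma le2_add: "le2 a1' b1' a1 b1 \<Longrightarrow> le2 a2' b2' a2 b2 \<Longrightarrow> le2 (a1' + a2') (b1' + b2') (a1 + a2) (b1 + b2)"
  by (auto simp: le2_def)

lemma oo_root: "oo t u \<Longrightarrow> tj G t T a b \<Longrightarrow> \<exists>a' b'. tj G u T a' b' \<and> le2 a' b' a b"
proof -
  assume o: "oo t u" and h: "tj G t T a b"
  from o have "o_ax t u \<or> o_ax u t" by (simp add: oo_def)
  then show ?thesis
  proof
    assume "o_ax t u"
    then show ?thesis
    proof (cases rule: o_ax.cases)
      case (o_CS)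
      then show ?thesis
      proof (cases rule: CS_ax.cases)
        case (1 t0 s v) then show ?thesis using CS_le h by (simp add: le2_def)
      qed
    next
      case (o_Lam t0 s) then show ?thesis using oLam_le h by (simp add: le2_def)
    next
      case (o_App t0 s v) then show ?thesis using oApp_le h by (simp add: le2_def)
    qed
  next
    assume "o_ax u t"
    then show ?thesis
    proof (cases rule: o_ax.cases)
      case (o_CS)
      then show ?thesis
      proof (cases rule: CS_ax.cases)
        case (1 t0 s v)
        then show ?thesis using CS_le[of G "sw 0 t0" v s T a b] h by (simp add: le2_def)
      qed
    next
      case (o_Lam t0 s) then show ?thesis using oLam_le2 h by (simp add: le2_def)
    next
      case (o_App t0 s v) then show ?thesis using oApp_le2 h by (simp add: le2_def)
    qed
  qed
qed

lemma ctx_eq: "ctx oo t t' \<Longrightarrow> \<forall>G T a b. tj G t T a b \<longrightarrow> (\<exists>a' b'. tj G t' T a' b' \<and> le2 a' b' a b)"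
proof (induct rule: ctx.induct)
  case (ctx_root t u) then show ?case using oo_root by blast
next
  case (ctx_Lam t u)
  show ?case
  proof (intro allI impI)
    fix G S a b assume "tj G (Lam t) S a b"
    then obtain M T a1 where h: "S = Arr M T" "a = Suc a1" "tj (ins 0 M G) t T a1 b" by (auto simp: tj_Lam)
    from ctx_Lam.hyps(2) h(3) obtain a' b' where "tj (ins 0 M G) u T a' b'" "le2 a' b' a1 b" by blast
    then show "\<exists>a' b'. tj G (Lam u) S a' b' \<and> le2 a' b' a b" using h
      by (rule_tac exI[of _ "Suc a'"], rule_tac exI[of _ b']) (auto simp: le2_def intro: tj_tjs.tLam)
  qed
next
  case (ctx_AppL t u s)
  show ?case
  proof (intro allI impI)
    fix G T a b assume a0: "tj G (App t s) T a b"
    obtain M G1 D a1 b1 a2 b2 where h: "G = cp G1 D" "tj G1 t (Arr M T) a1 b1" "tjm D s M a2 b2"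
      "a = Suc (a1 + a2)" "b = b1 + b2" using tj_App[THEN iffD1, OF a0] by blast
    from ctx_AppL.hyps(2) h(2) obtain a' b' where "tj G1 u (Arr M T) a' b'" "le2 a' b' a1 b1" by blast
    then show "\<exists>a' b'. tj G (App u s) T a' b' \<and> le2 a' b' a b" using h tAppm
      by (rule_tac exI[of _ "Suc (a' + a2)"], rule_tac exI[of _ "b' + b2"]) (auto simp: le2_def)
  qed
next
  case (ctx_AppR t u s)
  show ?case
  proof (intro allI impI)
    fix G T a b assume a0: "tj G (App s t) T a b"
    obtain M G1 D a1 b1 a2 b2 where h: "G = cp G1 D" "tj G1 s (Arr M T) a1 b1" "tjm D t M a2 b2"
      "a = Suc (a1 + a2)" "b = b1 + b2" using tj_App[THEN iffD1, OF a0] by blast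
    from tjm_step[of t u le2, OF _ le2_add h(3)] ctx_AppR.hyps(2) obtain a' b' where
      "tjm D u M a' b'" "le2 a' b' a2 b2" by blast
    then show "\<exists>a' b'. tj G (App s u) T a' b' \<and> le2 a' b' a b" using h tAppm
      by (rule_tac exI[of _ "Suc (a1 + a')"], rule_tac exI[of _ "b1 + b'"]) (auto simp: le2_def)
  qed
next
  case (ctx_SubL t u s)
  show ?case
  proof (intro allI impI)
    fix G T a b assume a0: "tj G (Sub t s) T a b"
    obtain M G1 D a1 b1 a2 b2 where h: "G = cp G1 D" "tj (ins 0 M G1) t T a1 b1" "tjm D s M a2 b2"
      "a = a1 + a2" "b = b1 + b2 + size M * size M" using tj_Sub[THEN iffD1, OF a0] by blast
    from ctx_SubL.hyps(2) h(2) obtain a' b' where "tj (ins 0 M G1) u T a' b'" "le2 a' b' a1 b1" by blast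
    then show "\<exists>a' b'. tj G (Sub u s) T a' b' \<and> le2 a' b' a b" using h tSubm
      by (rule_tac exI[of _ "a' + a2"], rule_tac exI[of _ "b' + b2 + size M * size M"]) (auto simp: le2_def)
  qed
next
  case (ctx_SubR t u s)
  show ?case
  proof (intro allI impI)
    fix G T a b assume a0: "tj G (Sub s t) T a b"
    obtain M G1 D a1 b1 a2 b2 where h: "G = cp G1 D" "tj (ins 0 M G1) s T a1 b1" "tjm D t M a2 b2"
      "a = a1 + a2" "b = b1 + b2 + size M * size M" using tj_Sub[THEN iffD1, OF a0] by blast
    from tjm_step[of t u le2, OF _ le2_add h(3)] ctx_SubR.hyps(2) obtain a' b' where
      "tjm D u M a' b'" "le2 a' b' a2 b2" by blast
    then show "\<exists>a' b'. tj G (Sub s u) T a' b' \<and> le2 a' b' a b" using h tSubm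
      by (rule_tac exI[of _ "a1 + a'"], rule_tac exI[of _ "b1 + b' + size M * size M"]) (auto simp: le2_def)
  qed
qed

lemma ctx_conv: "ctx r t u \<Longrightarrow> ctx (\<lambda>x y. r y x) u t"
  by (induct rule: ctx.induct) (auto intro: ctx.intros)

lemma eqo_le: "eqo t u \<Longrightarrow> tj G t T a b \<Longrightarrow> \<exists>a' b'. tj G u T a' b' \<and> le2 a' b' a b"
  unfolding eqo_def
proof (induct arbitrary: G T a b rule: equivclp_induct)
  case base then show ?case by (auto simp: le2_def)
next
  case (step y z)
  from step.hyps(3)[OF step.prems] obtain a1 b1 where h: "tj G y T a1 b1" "le2 a1 b1 a b" by blast
  have "ctx oo y z"
    using step.hyps(2)
  proof
    assume "ctx o_ax y z" then show "ctx oo y z" by (rule ctx_mono) (simp add: oo_def)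
  next
    assume "ctx o_ax z y" then have "ctx (\<lambda>x y. o_ax y x) y z" by (rule ctx_conv)
    then show "ctx oo y z" by (rule ctx_mono) (simp add: oo_def)
  qed
  from ctx_eq[OF this] h(1) obtain a2 b2 where "tj G z T a2 b2" "le2 a2 b2 a1 b1" by blast
  then show ?case using h(2) by (rule_tac exI[of _ a2], rule_tac exI[of _ b2]) (auto simp: le2_def)
qed

lemma ljmod_sr: "lj_mod eqo t u \<Longrightarrow> tj G t T a b \<Longrightarrow> \<exists>a' b'. tj G u T a' b' \<and> ltx a' b' a b"
proof -
  assume "lj_mod eqo t u" and h: "tj G t T a b"
  then obtain t' u' where e: "eqo t t'" "lj t' u'" "eqo u' u" by (auto simp: lj_mod_def)
  from eqo_le[OF e(1) h] obtain a1 b1 where h1: "tj G t' T a1 b1" "le2 a1 b1 a b" by blast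
  from ctx_sr[OF e(2)[unfolded lj_def]] h1(1) obtain a2 b2 where h2: "tj G u' T a2 b2" "ltx a2 b2 a1 b1" by blast
  from eqo_le[OF e(3) h2(1)] obtain a3 b3 where h3: "tj G u T a3 b3" "le2 a3 b3 a2 b2" by blast
  show ?thesis using h1(2) h2(2) h3 by (rule_tac exI[of _ a3], rule_tac exI[of _ b3]) (auto simp: le2_def ltx_def)
qed

lemma typed_SN: "tj G t T a b \<Longrightarrow> SN (lj_mod eqo) t"
proof -
  have "\<forall>t a b. p = (a, b) \<longrightarrow> tj G t T a b \<longrightarrow> Wellfounded.accp (\<lambda>y x. lj_mod eqo x y) t" for p
  proof (induct p rule: wf_induct[OF wf_lex_prod[OF wf_less_than wf_less_than]])
    case (1 p)
    show ?case
    proof (intro allI impI)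
      fix t a b assume p: "p = (a, b)" and h: "tj G t T a b"
      show "Wellfounded.accp (\<lambda>y x. lj_mod eqo x y) t"
      proof (rule accp.accI)
        fix y assume "lj_mod eqo t y"
        from ljmod_sr[OF this h] obtain a' b' where "tj G y T a' b'" "ltx a' b' a b" by blast
        moreover have "((a', b'), p) \<in> less_than <*lex*> less_than" using \<open>ltx a' b' a b\<close> p
          by (auto simp: ltx_def)
        ultimately show "Wellfounded.accp (\<lambda>y x. lj_mod eqo x y) y" using 1 by blast
      qed
    qed
  qed
  then show "tj G t T a b \<Longrightarrow> SN (lj_mod eqo) t" by (auto simp: SN_def)
qed


definition typable :: "trm \<Rightarrow> bool" where "typable t \<longleftrightarrow> (\<exists>G T a b. tj G t T a b)"

lemma tjm_some: "tjm D u M a b \<Longrightarrow> typable u"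
proof -
  assume h: "tjm D u M a b"
  show ?thesis
  proof (cases "M = {#}")
    case True then show ?thesis using h by (auto simp: tjm_def typable_def)
  next
    case False
    then obtain x where "x \<in># M" by (meson multiset_nonemptyE)
    have "tjs D u M a b" using h False by (simp add: tjm_def)
    from tjs_pick[OF this \<open>x \<in># M\<close>] show ?thesis unfolding typable_def by blast
  qed
qed

lemma typable_App: "typable (App s t) \<Longrightarrow> typable s \<and> typable t"
proof -
  assume "typable (App s t)"
  then obtain G T a b where "tj G (App s t) T a b" by (auto simp: typable_def)
  then obtain M G1 D a1 b1 a2 b2 where "tj G1 s (Arr M T) a1 b1" "tjm D t M a2 b2"
    using tj_App[THEN iffD1] by blast
  then show ?thesis using tjm_some unfolding typable_def by blast
qed

lemma typable_Lam: "typable (Lam s) \<Longrightarrow> typable s"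
proof -
  assume "typable (Lam s)"
  then obtain G T a b where "tj G (Lam s) T a b" by (auto simp: typable_def)
  then show ?thesis using tj_Lam[THEN iffD1] unfolding typable_def by blast
qed

lemma typable_Lam_intro: "typable s \<Longrightarrow> typable (Lam s)"
proof -
  assume "typable s"
  then obtain G T a b where "tj G s T a b" by (auto simp: typable_def)
  then have "tj (ins 0 (G 0) (del 0 G)) s T a b" by (simp add: ins_del0)
  then have "tj (del 0 G) (Lam s) (Arr (G 0) T) (Suc a) b" by (rule tj_tjs.tLam)
  then show ?thesis by (auto simp: typable_def)
qed

fun apps :: "trm \<Rightarrow> trm list \<Rightarrow> trm" where
  "apps h [] = h"
| "apps h (t # ts) = apps (App h t) ts"

lemma apps_snoc: "apps h (ts @ [v]) = App (apps h ts) v"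
  by (induct ts arbitrary: h) auto

lemma typable_apps: "typable (apps h ts) \<Longrightarrow> typable h \<and> (\<forall>t\<in>set ts. typable t)"
proof (induct ts arbitrary: h)
  case (Cons x ts)
  from Cons.prems have "typable (apps (App h x) ts)" by simp
  from Cons.hyps[OF this] have "typable (App h x)" "\<forall>t\<in>set ts. typable t" by blast+
  then show ?case using typable_App[of h x] by simp
qed simp

lemma beta_apps_head: "beta h h' \<Longrightarrow> beta (apps h ys) (apps h' ys)"
proof (induct ys arbitrary: h h')
  case (Cons y ys)
  have "beta (App h y) (App h' y)" using Cons.prems by (rule beta.beta_AppL)
  then show ?case using Cons.hyps by simp
qed simp

lemma beta_apps_arg: "beta t t' \<Longrightarrow> beta (apps h (xs @ t # ys)) (apps h (xs @ t' # ys))"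
proof (induct xs arbitrary: h)
  case Nil
  have "beta (App h t) (App h t')" using Nil by (rule beta.beta_AppR)
  then show ?case by (simp add: beta_apps_head)
next
  case (Cons x xs) then show ?case by simp
qed

lemma size_apps_ge: "size h \<le> size (apps h ts)"
proof (induct ts arbitrary: h)
  case (Cons x ts)
  have "size h \<le> size (App h x)" by simp
  then show ?case using Cons[of "App h x"] by simp
qed simp

lemma size_apps_arg: "t \<in> set ts \<Longrightarrow> size t < size (apps h ts)"
proof (induct ts arbitrary: h)
  case Nil then show ?case by simp
next
  case (Cons x ts)
  show ?case
  proof (cases "t = x")
    case True
    have "size x < size (App h x)" by simp
    then show ?thesis using True size_apps_ge[of "App h x" ts] by simp
  next
    case False
    then show ?thesis using Cons by simp
  qed
qed


lemma tjm_union: "tjm E1 u M1 a1 b1 \<Longrightarrow> tjm E2 u M2 a2 b2 \<Longrightarrow> \<exists>E a b. tjm E u (M1 + M2) a b"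
proof -
  assume h1: "tjm E1 u M1 a1 b1" and h2: "tjm E2 u M2 a2 b2"
  show ?thesis
  proof (cases "M1 = {#}")
    case True then show ?thesis using h2 by auto
  next
    case F1: False
    show ?thesis
    proof (cases "M2 = {#}")
      case True then show ?thesis using h1 by auto
    next
      case False
      have "tjs E1 u M1 a1 b1" "tjs E2 u M2 a2 b2" using h1 h2 F1 False by (auto simp: tjm_def)
      from tjs_union[OF this] show ?thesis using F1 by (auto simp: tjm_def)
    qed
  qed
qed

lemma AS_tjs:
  assumes IH: "\<forall>G T a b. tj G (subst t k u) T a b \<longrightarrow>
      (\<exists>G0 E a1 b1 a2 b2. tj G0 t T a1 b1 \<and> tjm E u (G0 k) a2 b2 \<and> (\<forall>i. del k G0 i \<subseteq># G i))"
    and U: "tj Du u s c d"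
  shows "tjs D (subst t k u) M a b \<Longrightarrow>
      \<exists>G0 E a1 b1 a2 b2. tjs G0 t M a1 b1 \<and> tjm E u (G0 k) a2 b2 \<and> (\<forall>i. del k G0 i \<subseteq># D i)"
proof (induct M arbitrary: D a b)
  case empty
  have D: "D = e0" using empty by (simp add: tjs_empty)
  have n: "tjs e0 t {#} 0 0" by (rule tj_tjs.sNil)
  have m: "tjm Du u (e0 k) c d" using U by (auto simp: tjm_def e0_at)
  have "\<forall>i. del k e0 i \<subseteq># D i" using D by simp
  then show ?case using n m by blast
next
  case (add s0 M)
  from add.prems obtain D1 D2 a1 b1 a2 b2 where d: "D = cp D1 D2" "tj D1 (subst t k u) s0 a1 b1"
    "tjs D2 (subst t k u) M a2 b2" by (auto simp: tjs_add)
  from IH d(2) obtain G1 E1 x1 y1 x2 y2 where g1: "tj G1 t s0 x1 y1" "tjm E1 u (G1 k) x2 y2"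
    "\<forall>i. del k G1 i \<subseteq># D1 i" by blast
  from add.hyps[OF d(3)] obtain G2 E2 x3 y3 x4 y4 where g2: "tjs G2 t M x3 y3" "tjm E2 u (G2 k) x4 y4"
    "\<forall>i. del k G2 i \<subseteq># D2 i" by blast
  have r: "tjs (cp G1 G2) t (add_mset s0 M) (x1 + x3) (y1 + y3)" using g1(1) g2(1) by (rule tj_tjs.sAdd)
  from tjm_union[OF g1(2) g2(2)] obtain E e f where "tjm E u (cp G1 G2 k) e f" by (auto simp: cp_at)
  moreover have "\<forall>i. del k (cp G1 G2) i \<subseteq># D i" using g1(3) g2(3) d(1)
    by (auto simp: cp_at del_cp subset_mset.add_mono)
  ultimately show ?case using r by blast
qed

lemma AS: "is_lambda t \<Longrightarrow> tj Du u s c d \<Longrightarrow> tj G (subst t k u) T a b \<Longrightarrow>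
    \<exists>G0 E a1 b1 a2 b2. tj G0 t T a1 b1 \<and> tjm E u (G0 k) a2 b2 \<and> (\<forall>i. del k G0 i \<subseteq># G i)"
proof (induct t arbitrary: k u Du s c d G T a b)
  case (Var j)
  show ?case
  proof (cases "j = k")
    case True
    then have h: "tj G u T a b" using Var.prems by simp
    have v: "tj (sing k T) (Var k) T 1 0" using tj_tjs.tVar[of k T e0] by simp
    have "tjm G u (sing k T k) a b" using h by (simp add: tjm_def sing_at tjs_single)
    moreover have "\<forall>i. del k (sing k T) i \<subseteq># G i" by (simp add: e0_at)
    ultimately show ?thesis using v True by blast
  next
    case False
    let ?j = "if j < k then j else j - 1"
    have "tj G (Var ?j) T a b" using Var.prems False by (simp split: if_splits)
    then obtain G' where G: "G = cp (sing ?j T) G'" by (auto simp: tj_Var)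
    have v: "tj (sing j T) (Var j) T 1 0" using tj_tjs.tVar[of j T e0] by simp
    have "tjm Du u (sing j T k) c d" using Var.prems(2) False by (auto simp: tjm_def sing_at)
    moreover have "\<forall>i. del k (sing j T) i \<subseteq># G i" using False G by (simp add: del_sing cp_at)
    ultimately show ?thesis using v by blast
  qed
next
  case (Lam t)
  from Lam.prems(3) obtain N T' a1 where h: "T = Arr N T'" "a = Suc a1"
    "tj (ins 0 N G) (subst t (Suc k) (lift 0 u)) T' a1 b" using tj_Lam[THEN iffD1] by fastforce
  have U': "tj (ins 0 {#} Du) (lift 0 u) s c d" by (rule tj_lift(1)[OF Lam.prems(2)])
  from Lam.hyps[OF _ U' h(3)] Lam.prems(1) obtain G0 E x1 y1 x2 y2 where
    g: "tj G0 t T' x1 y1" "tjm E (lift 0 u) (G0 (Suc k)) x2 y2" "\<forall>i. del (Suc k) G0 i \<subseteq># ins 0 N G i"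
    by auto
  have e: "tjm (del 0 E) u (G0 (Suc k)) x2 y2" by (rule tjm_unlift[OF g(2)])
  have "G0 0 \<subseteq># N" using g(3) by (auto simp: cx_app dest: spec[of _ 0])
  then have "\<And>i. G0 i \<subseteq># ins 0 N (del 0 G0) i" by (simp add: cx_app)
  from weak_le[OF g(1) this] have "tj (del 0 G0) (Lam t) (Arr N T') (Suc x1) y1" by (rule tj_tjs.tLam)
  then have t1: "tj (del 0 G0) (Lam t) T (Suc x1) y1" using h(1) by simp
  have "del 0 G0 k = G0 (Suc k)" by (simp add: cx_app)
  then have e': "tjm (del 0 E) u (del 0 G0 k) x2 y2" using e by simp
  have c: "\<forall>i. del k (del 0 G0) i \<subseteq># G i"
  proof
    fix i
    have "del (Suc k) G0 (Suc i) \<subseteq># ins 0 N G (Suc i)" using g(3) by blast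
    then show "del k (del 0 G0) i \<subseteq># G i" by (simp add: cx_app split: if_splits)
  qed
  show ?case using t1 e' c by blast
next
  case (App t1 t2)
  from App.prems(3) obtain M G1 D x1 y1 x2 y2 where h: "G = cp G1 D"
    "tj G1 (subst t1 k u) (Arr M T) x1 y1" "tjm D (subst t2 k u) M x2 y2"
    using tj_App[THEN iffD1] by fastforce
  from App.hyps(1)[OF _ App.prems(2) h(2)] App.prems(1) obtain G01 E1 e1 f1 e2 f2 where
    g1: "tj G01 t1 (Arr M T) e1 f1" "tjm E1 u (G01 k) e2 f2" "\<forall>i. del k G01 i \<subseteq># G1 i" by auto
  have "\<exists>G02 E2 e3 f3 e4 f4. tjm G02 t2 M e3 f3 \<and> tjm E2 u (G02 k) e4 f4 \<and> (\<forall>i. del k G02 i \<subseteq># D i)"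
  proof (cases "M = {#}")
    case True
    then obtain s' where "tj D (subst t2 k u) s' x2 y2" using h(3) by (auto simp: tjm_def)
    from App.hyps(2)[OF _ App.prems(2) this] App.prems(1) obtain G02 E2 e3 f3 e4 f4 where
      g: "tj G02 t2 s' e3 f3" "tjm E2 u (G02 k) e4 f4" "\<forall>i. del k G02 i \<subseteq># D i" by auto
    have "tjm G02 t2 M e3 f3" using g(1) True by (auto simp: tjm_def)
    then show ?thesis using g(2,3) by blast
  next
    case False
    then have "tjs D (subst t2 k u) M x2 y2" using h(3) by (simp add: tjm_def)
    have IH2: "\<forall>G T a b. tj G (subst t2 k u) T a b \<longrightarrow>
      (\<exists>G0 E a1 b1 a2 b2. tj G0 t2 T a1 b1 \<and> tjm E u (G0 k) a2 b2 \<and> (\<forall>i. del k G0 i \<subseteq># G i))"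
      using App.hyps(2) App.prems(1,2) by auto
    from AS_tjs[OF IH2 App.prems(2) \<open>tjs D (subst t2 k u) M x2 y2\<close>] obtain G02 E2 e3 f3 e4 f4 where
      g: "tjs G02 t2 M e3 f3" "tjm E2 u (G02 k) e4 f4" "\<forall>i. del k G02 i \<subseteq># D i" by blast
    have "tjm G02 t2 M e3 f3" using g(1) False by (auto simp: tjm_def)
    then show ?thesis using g(2,3) by blast
  qed
  then obtain G02 E2 e3 f3 e4 f4 where g2: "tjm G02 t2 M e3 f3" "tjm E2 u (G02 k) e4 f4"
    "\<forall>i. del k G02 i \<subseteq># D i" by blast
  have r: "tj (cp G01 G02) (App t1 t2) T (Suc (e1 + e3)) (f1 + f3)" using g1(1) g2(1) by (rule tAppm)
  from tjm_union[OF g1(2) g2(2)] obtain E e f where "tjm E u (cp G01 G02 k) e f" by (auto simp: cp_at)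
  moreover have "\<forall>i. del k (cp G01 G02) i \<subseteq># G i" using g1(3) g2(3) h(1)
    by (auto simp: cp_at del_cp subset_mset.add_mono)
  ultimately show ?case using r by blast
next
  case (Sub t1 t2) then show ?case by simp
qed


lemma SE: "is_lambda b \<Longrightarrow> typable u \<Longrightarrow> tj G (apps (subst b 0 u) ts) T a c \<Longrightarrow>
   \<exists>G' a' c'. tj G' (apps (App (Lam b) u) ts) T a' c'"
proof (induct ts arbitrary: G T a c rule: rev_induct)
  case Nil
  from Nil.prems(2) obtain Du s x y where U: "tj Du u s x y" by (auto simp: typable_def)
  from AS[OF Nil.prems(1) U, of G 0 T a c] Nil.prems(3) obtain G0 E a1 b1 a2 b2 where
    g: "tj G0 b T a1 b1" "tjm E u (G0 0) a2 b2" by auto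
  have "tj (ins 0 (G0 0) (del 0 G0)) b T a1 b1" using g(1) by (simp add: ins_del0)
  then have "tj (del 0 G0) (Lam b) (Arr (G0 0) T) (Suc a1) b1" by (rule tj_tjs.tLam)
  from tAppm[OF this g(2)] show ?case by auto
next
  case (snoc v ts)
  from snoc.prems(3) obtain M G1 D a1 b1 a2 b2 where h: "tj G1 (apps (subst b 0 u) ts) (Arr M T) a1 b1"
    "tjm D v M a2 b2" using tj_App[THEN iffD1] by (fastforce simp: apps_snoc)
  from snoc.hyps[OF snoc.prems(1,2) h(1)] obtain G' a' c' where "tj G' (apps (App (Lam b) u) ts) (Arr M T) a' c'"
    by blast
  from tAppm[OF this h(2)] show ?case by (auto simp: apps_snoc)
qed

lemma neutral: "(\<forall>t\<in>set ts. typable t) \<Longrightarrow> \<exists>G a b. tj G (apps (Var x) ts) T a b"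
proof (induct ts arbitrary: T rule: rev_induct)
  case Nil
  have "tj (sing x T) (Var x) T 1 0" using tj_tjs.tVar[of x T e0] by simp
  then show ?case by auto
next
  case (snoc v ts)
  from snoc.prems obtain Dv s av bv where v: "tj Dv v s av bv" by (auto simp: typable_def)
  from snoc.hyps[of "Arr {#s#} T"] snoc.prems obtain G a b where
    g: "tj G (apps (Var x) ts) (Arr {#s#} T) a b" by auto
  have "tjm Dv v {#s#} av bv" using v by (simp add: tjm_def tjs_single)
  from tAppm[OF g this] show ?case by (auto simp: apps_snoc)
qed

lemma decomp: "is_lambda t \<Longrightarrow>
  (\<exists>x ts. t = apps (Var x) ts \<and> (\<forall>s\<in>set ts. is_lambda s)) \<or>
  (\<exists>b. t = Lam b \<and> is_lambda b) \<or>
  (\<exists>b u ts. t = apps (App (Lam b) u) ts \<and> is_lambda b \<and> is_lambda u \<and> (\<forall>s\<in>set ts. is_lambda s))"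
proof (induct t)
  case (Var x)
  have "Var x = apps (Var x) [] \<and> (\<forall>s\<in>set []. is_lambda s)" by simp
  then show ?case by (intro disjI1 exI)
next
  case (Lam t) then show ?case by auto
next
  case (App t1 t2)
  then have l: "is_lambda t1" "is_lambda t2" by auto
  from App.hyps(1)[OF l(1)] show ?case
  proof (elim disjE exE conjE)
    fix x ts assume "t1 = apps (Var x) ts" "\<forall>s\<in>set ts. is_lambda s"
    then have "App t1 t2 = apps (Var x) (ts @ [t2])" "\<forall>s\<in>set (ts @ [t2]). is_lambda s"
      using l by (auto simp: apps_snoc)
    then show ?thesis by blast
  next
    fix b assume "t1 = Lam b" "is_lambda b"
    then have "App t1 t2 = apps (App (Lam b) t2) []" by simp
    then show ?thesis using \<open>is_lambda b\<close> l
      by (rule_tac disjI2, rule_tac disjI2, rule_tac exI[of _ b], rule_tac exI[of _ t2], rule_tac exI[of _ "[]"]) simp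
  next
    fix b u ts assume "t1 = apps (App (Lam b) u) ts" "is_lambda b" "is_lambda u" "\<forall>s\<in>set ts. is_lambda s"
    then have "App t1 t2 = apps (App (Lam b) u) (ts @ [t2])" "\<forall>s\<in>set (ts @ [t2]). is_lambda s"
      using l by (auto simp: apps_snoc)
    then show ?thesis using \<open>is_lambda b\<close> \<open>is_lambda u\<close> by blast
  qed
next
  case (Sub t1 t2) then show ?case by simp
qed

lemma typable_L: "\<forall>t. size t = n \<longrightarrow> is_lambda t \<longrightarrow> (\<forall>s. beta t s \<longrightarrow> typable s) \<longrightarrow> typable t"
proof (induct n rule: less_induct)
  case (less n)
  show ?case
  proof (intro allI impI)
    fix t assume sz: "size t = n" and lam: "is_lambda t" and red: "\<forall>s. beta t s \<longrightarrow> typable s"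
    have IH: "\<And>t'. size t' < size t \<Longrightarrow> is_lambda t' \<Longrightarrow> (\<forall>s. beta t' s \<longrightarrow> typable s) \<Longrightarrow> typable t'"
      using less sz by blast
    from decomp[OF lam] show "typable t"
    proof (elim disjE exE conjE)
      fix x ts assume t: "t = apps (Var x) ts" and ls: "\<forall>s\<in>set ts. is_lambda s"
      have "\<forall>ti\<in>set ts. typable ti"
      proof
        fix ti assume ti: "ti \<in> set ts"
        then obtain xs ys where ts: "ts = xs @ ti # ys" by (meson split_list)
        have "\<forall>s. beta ti s \<longrightarrow> typable s"
        proof (intro allI impI)
          fix s assume "beta ti s"
          then have "beta t (apps (Var x) (xs @ s # ys))" using t ts by (simp add: beta_apps_arg)
          then have "typable (apps (Var x) (xs @ s # ys))" using red by blast
          from typable_apps[OF this] show "typable s" by simp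
        qed
        moreover have "size ti < size t" using size_apps_arg[OF ti, of "Var x"] t by simp
        moreover have "is_lambda ti" using ls ti by blast
        ultimately show "typable ti" using IH[of ti] by blast
      qed
      from neutral[OF this, of x Base] obtain G a b where "tj G (apps (Var x) ts) Base a b" by blast
      then show "typable t" using t unfolding typable_def by blast
    next
      fix b assume t: "t = Lam b" and lb: "is_lambda b"
      have "\<forall>s. beta b s \<longrightarrow> typable s"
      proof (intro allI impI)
        fix s assume "beta b s"
        then have "beta t (Lam s)" using t by (simp add: beta.beta_Lam)
        then have "typable (Lam s)" using red by blast
        then show "typable s" by (rule typable_Lam)
      qed
      then have "typable b" using IH[of b] t lb by simp
      then show "typable t" using t typable_Lam_intro by simp
    next
      fix b u ts assume t: "t = apps (App (Lam b) u) ts" and lb: "is_lambda b" and lu: "is_lambda u"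
        and ls: "\<forall>s\<in>set ts. is_lambda s"
      have "beta t (apps (subst b 0 u) ts)" using t by (simp add: beta_apps_head beta.beta_root)
      then have r: "typable (apps (subst b 0 u) ts)" using red by blast
      have "\<forall>s. beta u s \<longrightarrow> typable s"
      proof (intro allI impI)
        fix s assume "beta u s"
        then have "beta (App (Lam b) u) (App (Lam b) s)" by (rule beta.beta_AppR)
        then have "beta t (apps (App (Lam b) s) ts)" using t by (simp add: beta_apps_head)
        then have "typable (apps (App (Lam b) s) ts)" using red by blast
        from typable_apps[OF this] have "typable (App (Lam b) s)" by simp
        then show "typable s" using typable_App by blast
      qed
      moreover have "size u < size t"
        using t size_apps_ge[of "App (Lam b) u" ts] by simp
      ultimately have "typable u" using IH[of u] lu by blast
      from r obtain G T a c where "tj G (apps (subst b 0 u) ts) T a c" by (auto simp: typable_def)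
      from SE[OF lb \<open>typable u\<close> this] show "typable t" using t by (auto simp: typable_def)
    qed
  qed
qed

lemma SN_beta_typable: "Wellfounded.accp (\<lambda>y x. beta x y) t \<Longrightarrow> is_lambda t \<Longrightarrow> typable t"
proof (induct rule: accp.induct)
  case (accI x)
  have "\<forall>s. beta x s \<longrightarrow> typable s" using accI beta_lam by blast
  then show ?case using typable_L accI.prems by blast
qed

theorem PSN_o: "PSN (lj_mod eqo)"
  unfolding PSN_def
proof (intro allI impI)
  fix t assume "is_lambda t" "SN beta t"
  then have "typable t" using SN_beta_typable by (simp add: SN_def)
  then show "SN (lj_mod eqo) t" using typed_SN by (auto simp: typable_def)
qed

theorem PSN_CS: "PSN (lj_mod eqCS)"
  unfolding PSN_def
proof (intro allI impI)
  fix t assume "is_lambda t" "SN beta t"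
  then have "SN (lj_mod eqo) t" using PSN_o by (simp add: PSN_def)
  moreover have "(\<lambda>y x. lj_mod eqCS x y) \<le> (\<lambda>y x. lj_mod eqo x y)"
    by (auto simp: lj_mod_def intro: eqCS_eqo)
  ultimately show "SN (lj_mod eqCS) t" unfolding SN_def using accp_subset by blast
qed

theorem theorem24:
  shows "confluent_mod eqCS (lj_mod eqCS) \<and> PSN (lj_mod eqCS) \<and>
         confluent_mod eqo (lj_mod eqo) \<and> PSN (lj_mod eqo)"
  using conf_CS PSN_CS conf_o PSN_o by blast


end
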